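(* Let $G\in\mathcal W^{0,+}_T$ with $G<+\infty$ $\mathcal Q^T$-q.s. 1. Let $U$ be a random utility function such that $\sup_{P\in\mathcal Q^T}E_PU^-(\cdot,y)<\infty$ for all $y>0$, and $E_PU^+(\cdot,1)<\infty$ and $E_P|U(\cdot,G(\cdot))|<\infty$ for all $P\in\mathcal Q^T$. (a) For every $P\in\mathcal Q^T$ there is a unique constant $e(G,P)\in[0,\infty)$ with $E_PU(\cdot,e(G,P))=E_PU(\cdot,G(\cdot))$. (b) If moreover $G\in\mathcal W^{\infty,+}_T$, $\sup_{P\in\mathcal Q^T}E_PU^-(\cdot,G(\cdot))<\infty$ and $\inf_{P\in\mathcal Q^T}E_PU'(\cdot,z)>0$ for all $z>0$, then there is a unique $e(G)\in[0,\|G\|_\infty]$ with $\inf_{P\in\mathcal Q^T}E_PU(\cdot,e(G))=\inf_{P\in\mathcal Q^T}E_PU(\cdot,G(\cdot))$, and $e(G)\ge\inf_{P\in\mathcal Q^T}e(G,P)$. 2. Let $U$ be a non-random utility function with $\{x\in\mathbb R:U(x)>-\infty\}=(0,\infty)$, such that $E_PU^+(G(\cdot))<\infty$ for all $P\in\mathcal Q^T$ and $\sup_{P\in\mathcal Q^T}E_PU^-(G(\cdot))<\infty$. Then there exist unique $e(G,P)\in[0,\infty)$ (for each $P\in\mathcal Q^T$) and $e(G)\in[0,\infty)$ with $U(e(G,P))=E_PU(G(\cdot))$ for all $P\in\mathcal Q^T$ and $U(e(G))=\inf_{P\in\mathcal Q^T}E_PU(G(\cdot))$. Moreover $e(G,P)\le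 E_PG$ for all $P\in\mathcal Q^T$ and $e(G)=\inf_{P\in\mathcal Q^T}e(G,P)\le\inf_{P\in\mathcal Q^T}E_PG$. Furthermore, with $\rho(G,P):=E_PG-e(G,P)$ and $\rho(G):=\sup_{P\in\mathcal Q^T}\rho(G,P)$, one has $0\le\rho(G)\le\sup_{P\in\mathcal Q^T}E_PG-e(G)$.
   Context: Framework: $T\ge1$; Polish spaces $\Omega_1,\dots,\Omega_T$; $\Omega^t:=\Omega_1\times\cdots\times\Omega_t$. $\mathfrak P(X)$: Borel probability measures on Polish $X$; $\mathcal B_c(X)$: universal $\sigma$-algebra (intersection of all completions of the Borel $\sigma$-algebra), each $P$ extended to it. $\mathcal SK_t$: universally measurable stochastic kernels on $\Omega_t$ given $\Omega^{t-1}$; $P\otimes p(A):=\int\int1_A(\omega^{t-1},\omega_t)p(d\omega_t,\omega^{t-1})P(d\omega^{t-1})$. Given random sets $\mathcal Q_{t+1}:\Omega^t\twoheadrightarrow\mathfrak P(\Omega_{t+1})$, $\mathcal Q^T:=\{Q_1\otimes q_2\otimes\cdots\otimes q_T:Q_1\in\mathcal Q_1,\ q_{s+1}\in\mathcal SK_{s+1},\ q_{s+1}(\cdot,\omega^s)\in\mathcal Q_{s+1}(\omega^s)\ Q_s\text{-a.s.}\}$, $Q_s:=Q_1\otimes\cdots\otimes q_s$. "$\mathcal Q^T$-q.s." means outside a set contained, for every $P\in\mathcal Q^T$, in a $P$-null universally measurable set. $\mathcal W^{0,+}_T$: universally measurable $X:\Omega^T\to[0,\infty]$; $\mathcal W^{\infty,+}_T$: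 those bounded $\mathcal Q^T$-q.s. by a constant; $\|G\|_\infty:=\inf\{M\ge0:|G|\le M\ \mathcal Q^T\text{-q.s.}\}$. A random utility function is $U:\Omega^T\times(0,\infty)\to\mathbb R$ with $U(\cdot,x)$ universally measurable for each $x>0$ and $U(\omega^T,\cdot)$ concave, strictly increasing and twice continuously differentiable on $(0,\infty)$ for each $\omega^T$, extended to $0$ by right-continuity and by $U(\cdot,x)=-\infty$ for $x<0$; $U'$ is the derivative in $x$. A non-random utility function is one not depending on $\omega^T$. $U^\pm$ denote positive and negative parts. *)

theory Defs
  imports "HOL-Probability.Probability"
begin

definition Polish_space :: "'a topology \<Rightarrow> bool" where
  "Polish_space Y \<longleftrightarrow> completely_metrizable_space Y \<and> separable_space Y"

definition borel_of :: "'a topology \<Rightarrow> 'a measure" where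
  "borel_of Y = sigma (topspace Y) {U. openin Y U}"

definition probs :: "'a topology \<Rightarrow> 'a measure set" where
  "probs Y = {P. prob_space P \<and> sets P = sets (borel_of Y) \<and> space P = topspace Y}"

definition univ_sets :: "'a topology \<Rightarrow> 'a set set" where
  "univ_sets Y = {A. A \<subseteq> topspace Y \<and> (\<forall>P\<in>probs Y. A \<in> sets (completion P))}"

definition univ_space :: "'a topology \<Rightarrow> 'a measure" where
  "univ_space Y = measure_of (topspace Y) (univ_sets Y) (\<lambda>_. 0)"

text \<open>Omega^t = Omega_1 x ... x Omega_t, realised as functions on {1..t}
  (extensional, i.e. undefined outside {1..t}) with the product topology.\<close>
definition Om :: "(nat \<Rightarrow> 'a topology) \<Rightarrow> nat \<Rightarrow> (nat \<Rightarrow> 'a) topology" where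
  "Om X t = product_topology X {1..t}"

definition SK :: "(nat \<Rightarrow> 'a topology) \<Rightarrow> nat \<Rightarrow> ((nat \<Rightarrow> 'a) \<Rightarrow> 'a measure) \<Rightarrow> bool" where
  "SK X t p \<longleftrightarrow>
     (\<forall>\<omega>\<in>topspace (Om X (t - 1)). p \<omega> \<in> probs (X t)) \<and>
     (\<forall>A\<in>sets (borel_of (X t)).
        (\<lambda>\<omega>. measure (p \<omega>) A) \<in> borel_measurable (univ_space (Om X (t - 1))))"

definition kcomp :: "(nat \<Rightarrow> 'a topology) \<Rightarrow> nat \<Rightarrow> (nat \<Rightarrow> 'a) measure
     \<Rightarrow> ((nat \<Rightarrow> 'a) \<Rightarrow> 'a measure) \<Rightarrow> (nat \<Rightarrow> 'a) measure" where
  "kcomp X t P p = measure_of (topspace (Om X t)) (sets (borel_of (Om X t)))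
     (\<lambda>A. \<integral>\<^sup>+ \<omega>. emeasure (p \<omega>) {x \<in> topspace (X t). fun_upd \<omega> t x \<in> A} \<partial>completion P)"

text \<open>Q_s = Q_1 (x) q_2 (x) ... (x) q_s; Q_1 is encoded as a kernel q 1 from the one-point
  space Omega^0, and Q_0 is the Dirac measure on Omega^0.\<close>
fun Qseq :: "(nat \<Rightarrow> 'a topology) \<Rightarrow> (nat \<Rightarrow> (nat \<Rightarrow> 'a) \<Rightarrow> 'a measure) \<Rightarrow> nat \<Rightarrow> (nat \<Rightarrow> 'a) measure" where
  "Qseq X q 0 = return (borel_of (Om X 0)) (\<lambda>_. undefined)"
| "Qseq X q (Suc s) = kcomp X (Suc s) (Qseq X q s) (q (Suc s))"

text \<open>Q^T built from random sets Qr (s+1) : Omega^s ->> P(Omega_(s+1)), s = 0..T-1.\<close>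
definition QT :: "(nat \<Rightarrow> 'a topology) \<Rightarrow> (nat \<Rightarrow> (nat \<Rightarrow> 'a) \<Rightarrow> 'a measure set) \<Rightarrow> nat
     \<Rightarrow> (nat \<Rightarrow> 'a) measure set" where
  "QT X Qr T = {Qseq X q T | q. \<forall>s<T. SK X (Suc s) (q (Suc s)) \<and>
       (AE \<omega> in completion (Qseq X q s). q (Suc s) \<omega> \<in> Qr (Suc s) \<omega>)}"

definition qs :: "(nat \<Rightarrow> 'a) topology \<Rightarrow> (nat \<Rightarrow> 'a) measure set \<Rightarrow> ((nat \<Rightarrow> 'a) \<Rightarrow> bool) \<Rightarrow> bool" where
  "qs Y Qs Prop \<longleftrightarrow> (\<forall>P\<in>Qs. \<exists>N\<in>univ_sets Y. emeasure (completion P) N = 0 \<and>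
       {\<omega>\<in>topspace Y. \<not> Prop \<omega>} \<subseteq> N)"

definition qs_norm :: "(nat \<Rightarrow> 'a) topology \<Rightarrow> (nat \<Rightarrow> 'a) measure set \<Rightarrow> ((nat \<Rightarrow> 'a) \<Rightarrow> ennreal) \<Rightarrow> ennreal" where
  "qs_norm Y Qs G = Inf {M. qs Y Qs (\<lambda>\<omega>. G \<omega> \<le> M)}"

definition Epos :: "'b measure \<Rightarrow> ('b \<Rightarrow> ennreal) \<Rightarrow> ennreal" where
  "Epos P f = (\<integral>\<^sup>+ \<omega>. f \<omega> \<partial>completion P)"

text \<open>E_P f = E_P f^+ - E_P f^- (convention infinity - infinity = -infinity; never used below).\<close>
definition Eexp :: "'b measure \<Rightarrow> ('b \<Rightarrow> ereal) \<Rightarrow> ereal" where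
  "Eexp P f = (let a = Epos P (\<lambda>\<omega>. e2ennreal (f \<omega>)); b = Epos P (\<lambda>\<omega>. e2ennreal (- f \<omega>))
             in if a = \<infinity> \<and> b = \<infinity> then -\<infinity> else enn2ereal a - enn2ereal b)"

definition C2_pos :: "(real \<Rightarrow> real) \<Rightarrow> bool" where
  "C2_pos f \<longleftrightarrow> (\<exists>f' f''. (\<forall>x>0. (f has_real_derivative f' x) (at x) \<and>
                                   (f' has_real_derivative f'' x) (at x)) \<and>
                           continuous_on {0<..} f'')"

definition utility :: "(real \<Rightarrow> real) \<Rightarrow> bool" where
  "utility u \<longleftrightarrow> concave_on {0<..} u \<and> strict_mono_on {0<..} u \<and> C2_pos u"

definition Uext :: "(real \<Rightarrow> real) \<Rightarrow> real \<Rightarrow> ereal" where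
  "Uext u x = (if 0 < x then ereal (u x)
               else if x = 0 then Lim (at_right 0) (\<lambda>y. ereal (u y)) else -\<infinity>)"

definition random_utility :: "(nat \<Rightarrow> 'a topology) \<Rightarrow> nat \<Rightarrow> ((nat \<Rightarrow> 'a) \<Rightarrow> real \<Rightarrow> real) \<Rightarrow> bool" where
  "random_utility X T U \<longleftrightarrow>
     (\<forall>x>0. (\<lambda>\<omega>. U \<omega> x) \<in> borel_measurable (univ_space (Om X T))) \<and>
     (\<forall>\<omega>\<in>topspace (Om X T). utility (U \<omega>))"

end

theory Submission
  imports Defs
begin

definition EE :: "'b measure \<Rightarrow> ('b \<Rightarrow> ereal) \<Rightarrow> ereal" where
  "EE M f = (let a = (\<integral>\<^sup>+\<omega>. e2ennreal (f \<omega>) \<partial>M); b = (\<integral>\<^sup>+\<omega>. e2ennreal (- f \<omega>) \<partial>M)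
     in if a = \<infinity> \<and> b = \<infinity> then -\<infinity> else enn2ereal a - enn2ereal b)"

lemma Eexp_EE: "Eexp P f = EE (completion P) f"
  by (simp add: Eexp_def EE_def Epos_def)

lemma enn2ereal_fin: "a < \<infinity> \<Longrightarrow> enn2ereal a = ereal (enn2real a)"
  by (cases a rule: ennreal_cases) (auto simp: enn2ereal_ennreal)

lemma EE_mono_AE:
  assumes "AE \<omega> in M. f \<omega> \<le> g \<omega>"
  shows "EE M f \<le> EE M g"
proof -
  define a1 where "a1 = (\<integral>\<^sup>+\<omega>. e2ennreal (f \<omega>) \<partial>M)"
  define b1 where "b1 = (\<integral>\<^sup>+\<omega>. e2ennreal (- f \<omega>) \<partial>M)"
  define a2 where "a2 = (\<integral>\<^sup>+\<omega>. e2ennreal (g \<omega>) \<partial>M)"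
  define b2 where "b2 = (\<integral>\<^sup>+\<omega>. e2ennreal (- g \<omega>) \<partial>M)"
  have "a1 \<le> a2" unfolding a1_def a2_def
    by (rule nn_integral_mono_AE) (use assms in \<open>auto intro: e2ennreal_mono\<close>)
  moreover have "b2 \<le> b1" unfolding b1_def b2_def
    by (rule nn_integral_mono_AE) (use assms in \<open>eventually_elim, auto intro!: e2ennreal_mono\<close>)
  ultimately show ?thesis
    unfolding EE_def Let_def a1_def[symmetric] b1_def[symmetric] a2_def[symmetric] b2_def[symmetric]
    apply (cases "a1 = \<infinity> \<and> b1 = \<infinity>"; cases "a2 = \<infinity> \<and> b2 = \<infinity>")
    apply (auto simp: top_unique intro!: ereal_minus_mono simp flip: less_eq_ennreal.rep_eq)
    apply (auto simp: enn2ereal_fin less_top)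
    done
qed

lemma EE_mono: "(\<And>\<omega>. \<omega> \<in> space M \<Longrightarrow> f \<omega> \<le> g \<omega>) \<Longrightarrow> EE M f \<le> EE M g"
  by (rule EE_mono_AE) auto

lemma EE_cong_AE:
  assumes "AE \<omega> in M. f \<omega> = g \<omega>" shows "EE M f = EE M g"
proof -
  have "EE M f \<le> EE M g" by (rule EE_mono_AE) (use assms in eventually_elim, auto)
  moreover have "EE M g \<le> EE M f" by (rule EE_mono_AE) (use assms in eventually_elim, auto)
  ultimately show ?thesis by auto
qed


lemma EE_real:
  fixes f :: "'b \<Rightarrow> real"
  assumes "integrable M f"
  shows "EE M (\<lambda>\<omega>. ereal (f \<omega>)) = ereal (integral\<^sup>L M f)"
proof -
  have fm: "f \<in> borel_measurable M" using assms by auto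
  have n: "(\<integral>\<^sup>+ x. ennreal (norm (f x)) \<partial>M) < \<infinity>" using assms integrable_iff_bounded by blast
  have a: "(\<integral>\<^sup>+ x. ennreal (f x) \<partial>M) < \<infinity>"
    by (rule le_less_trans[OF _ n], rule nn_integral_mono) auto
  have b: "(\<integral>\<^sup>+ x. ennreal (- f x) \<partial>M) < \<infinity>"
    by (rule le_less_trans[OF _ n], rule nn_integral_mono) auto
  show ?thesis
    unfolding EE_def Let_def using a b
    by (simp add: e2ennreal_ereal real_lebesgue_integral_def[OF assms] enn2ereal_fin less_top)
qed

lemma EE_const:
  assumes "prob_space M"
  shows "EE M (\<lambda>_. c) = c"
proof -
  have sp: "emeasure M (space M) = 1" using assms prob_space.emeasure_space_1 by blast
  show ?thesis
    unfolding EE_def Let_def nn_integral_const sp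
    apply (cases c)
    subgoal for r by (cases "0 \<le> r") (auto simp: e2ennreal_ereal enn2ereal_ennreal ennreal_neg zero_ennreal.rep_eq)
    by (auto simp: e2ennreal_ereal enn2ereal_ennreal e2ennreal_neg zero_ennreal.rep_eq)
qed

locale CE = prob_space M for M :: "'b measure" +
  fixes V :: "'b \<Rightarrow> real \<Rightarrow> ereal"
  assumes V_fin: "\<And>\<omega> c. \<omega> \<in> space M \<Longrightarrow> 0 < c \<Longrightarrow> \<bar>V \<omega> c\<bar> \<noteq> \<infinity>"
  and V_mono: "\<And>\<omega> x y. \<omega> \<in> space M \<Longrightarrow> 0 \<le> x \<Longrightarrow> x < y \<Longrightarrow> V \<omega> x < V \<omega> y"
  and V_cont: "\<And>\<omega> c. \<omega> \<in> space M \<Longrightarrow> 0 < c \<Longrightarrow> isCont (\<lambda>x. real_of_ereal (V \<omega> x)) c"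
  and V_0: "\<And>\<omega>. \<omega> \<in> space M \<Longrightarrow> V \<omega> 0 = (INF c\<in>{0<..}. V \<omega> c)"
  and V_meas: "\<And>c. 0 < c \<Longrightarrow> (\<lambda>\<omega>. V \<omega> c) \<in> borel_measurable M"
  and V_int: "\<And>c. 0 < c \<Longrightarrow> integrable M (\<lambda>\<omega>. real_of_ereal (V \<omega> c))"
begin

definition "vr c \<omega> = real_of_ereal (V \<omega> c)"
definition "F c = EE M (\<lambda>\<omega>. V \<omega> c)"

lemma vr_int: "0 < c \<Longrightarrow> integrable M (vr c)"
  using V_int unfolding vr_def by (simp add: fun_eq_iff)

lemma V_eq: "\<omega> \<in> space M \<Longrightarrow> 0 < c \<Longrightarrow> V \<omega> c = ereal (vr c \<omega>)"
  using V_fin[of \<omega> c] unfolding vr_def by (cases "V \<omega> c") auto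

lemma V_le: "\<omega> \<in> space M \<Longrightarrow> 0 \<le> x \<Longrightarrow> x \<le> y \<Longrightarrow> V \<omega> x \<le> V \<omega> y"
  using V_mono[of \<omega> x y] by (cases "x = y") auto

lemma vr_less: "\<omega> \<in> space M \<Longrightarrow> 0 < x \<Longrightarrow> x < y \<Longrightarrow> vr x \<omega> < vr y \<omega>"
  using V_mono[of \<omega> x y] V_eq[of \<omega> x] V_eq[of \<omega> y] by auto

lemma vr_le: "\<omega> \<in> space M \<Longrightarrow> 0 < x \<Longrightarrow> x \<le> y \<Longrightarrow> vr x \<omega> \<le> vr y \<omega>"
  using vr_less[of \<omega> x y] by (cases "x = y") auto

lemma F_eq: "0 < c \<Longrightarrow> F c = ereal (integral\<^sup>L M (vr c))"
proof -
  assume c: "0 < c"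
  have "F c = EE M (\<lambda>\<omega>. ereal (vr c \<omega>))"
    unfolding F_def by (rule EE_cong_AE) (auto intro!: AE_I2 simp: V_eq c)
  also have "\<dots> = ereal (integral\<^sup>L M (vr c))"
    by (rule EE_real[OF vr_int[OF c]])
  finally show ?thesis .
qed

lemma F_le: "0 \<le> x \<Longrightarrow> x \<le> y \<Longrightarrow> F x \<le> F y"
  unfolding F_def by (rule EE_mono) (auto intro: V_le)

lemma F_less: 
  assumes "0 \<le> x" "x < y" shows "F x < F y"
proof (cases "x = 0")
  case False
  then have x: "0 < x" using assms by auto
  have "integral\<^sup>L M (vr x) < integral\<^sup>L M (vr y)"
    by (rule integral_less_AE_space) (use x assms in \<open>auto intro!: vr_int AE_I2 vr_less simp: emeasure_space_1\<close>)
  then show ?thesis using F_eq[OF x] F_eq[of y] x assms by auto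
next
  case True
  have "F x \<le> F (y/2)" using True assms by (intro F_le) auto
  also have "F (y/2) < F y"
  proof -
    have y: "0 < y/2" using True assms by auto
    have "integral\<^sup>L M (vr (y/2)) < integral\<^sup>L M (vr y)"
      by (rule integral_less_AE_space) (use y assms in \<open>auto intro!: vr_int AE_I2 vr_less simp: emeasure_space_1\<close>)
    then show ?thesis using F_eq[OF y] F_eq[of y] y by auto
  qed
  finally show ?thesis .
qed

lemma V0_seq: 
  assumes w: "\<omega> \<in> space M" shows "V \<omega> 0 = (INF n. V \<omega> (1 / Suc n))"
proof -
  have "(INF c\<in>{0<..}. V \<omega> c) = (INF n. V \<omega> (1 / Suc n))"
  proof (rule antisym)
    show "(INF c\<in>{0<..}. V \<omega> c) \<le> (INF n. V \<omega> (1 / Suc n))"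
      by (rule INF_mono) (auto intro!: bexI[of _ "1 / Suc _"])
    show "(INF n. V \<omega> (1 / Suc n)) \<le> (INF c\<in>{0<..}. V \<omega> c)"
    proof (rule INF_mono)
      fix c :: real assume "c \<in> {0<..}"
      then obtain n where n: "1 / real (Suc n) < c"
        using nat_approx_posE by auto
      show "\<exists>n\<in>UNIV. V \<omega> (1 / Suc n) \<le> V \<omega> c"
        using n by (intro bexI[of _ n] V_le[OF w]) auto
    qed
  qed
  then show ?thesis using V_0[OF w] by simp
qed

lemma V0_meas: "(\<lambda>\<omega>. V \<omega> 0) \<in> borel_measurable M"
proof -
  have "(\<lambda>\<omega>. INF n. V \<omega> (1 / Suc n)) \<in> borel_measurable M"
    by (intro borel_measurable_INF V_meas) auto
  then show ?thesis
    by (rule measurable_cong[THEN iffD1, rotated]) (simp add: V0_seq)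
qed

lemma vr_meas: "0 < c \<Longrightarrow> vr c \<in> borel_measurable M"
  using vr_int by auto

lemma Fr_cont:
  assumes c: "0 < c"
  shows "isCont (\<lambda>x. integral\<^sup>L M (vr x)) c"
  unfolding continuous_at_sequentially comp_def
proof (intro allI impI)
  fix x :: "nat \<Rightarrow> real" assume x: "x \<longlonglongrightarrow> c"
  have "\<forall>\<^sub>F n in sequentially. c/2 < x n" using x c by (intro order_tendstoD) auto
  moreover have "\<forall>\<^sub>F n in sequentially. x n < 2 * c" using x c by (intro order_tendstoD) auto
  ultimately obtain N where N: "\<And>n. N \<le> n \<Longrightarrow> c/2 < x n \<and> x n < 2 * c"
    unfolding eventually_sequentially by (metis (no_types, lifting) eventually_conj eventually_sequentially)
  define w where "w \<omega> = \<bar>vr (c/2) \<omega>\<bar> + \<bar>vr (2*c) \<omega>\<bar>" for \<omega>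
  have "(\<lambda>n. integral\<^sup>L M (vr (x (n + N)))) \<longlonglongrightarrow> integral\<^sup>L M (vr c)"
  proof (rule integral_dominated_convergence)
    show "vr c \<in> borel_measurable M" using c by (rule vr_meas)
    show "vr (x (n + N)) \<in> borel_measurable M" for n using N[of "n+N"] c by (intro vr_meas) auto
    show "integrable M w" unfolding w_def using c by (intro Bochner_Integration.integrable_add integrable_abs vr_int) auto
    show "AE \<omega> in M. (\<lambda>n. vr (x (n + N)) \<omega>) \<longlonglongrightarrow> vr c \<omega>"
    proof (rule AE_I2)
      fix \<omega> assume w: "\<omega> \<in> space M"
      have "isCont (\<lambda>y. vr y \<omega>) c" using V_cont[OF w c] unfolding vr_def .
      moreover have "(\<lambda>n. x (n + N)) \<longlonglongrightarrow> c" using x by (rule LIMSEQ_ignore_initial_segment)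
      ultimately show "(\<lambda>n. vr (x (n + N)) \<omega>) \<longlonglongrightarrow> vr c \<omega>" by (rule isCont_tendsto_compose)
    qed
    show "AE \<omega> in M. norm (vr (x (n + N)) \<omega>) \<le> w \<omega>" for n
    proof (rule AE_I2)
      fix \<omega> assume w: "\<omega> \<in> space M"
      have "vr (c/2) \<omega> \<le> vr (x (n+N)) \<omega>" "vr (x (n+N)) \<omega> \<le> vr (2*c) \<omega>"
        using N[of "n+N"] c by (auto intro!: vr_le w)
      then show "norm (vr (x (n + N)) \<omega>) \<le> w \<omega>" unfolding w_def by auto
    qed
  qed
  then show "(\<lambda>n. integral\<^sup>L M (vr (x n))) \<longlonglongrightarrow> integral\<^sup>L M (vr c)"
    by (rule LIMSEQ_offset)
qed

end

lemma ereal_INF_diff: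
  fixes A B :: "nat \<Rightarrow> ereal"
  assumes Ad: "decseq A" and Bi: "incseq B"
    and Af: "\<And>n. \<bar>A n\<bar> \<noteq> \<infinity>" and Bf: "\<And>n. \<bar>B n\<bar> \<noteq> \<infinity>"
    and A0: "\<And>n. 0 \<le> A n" and B0: "\<And>n. 0 \<le> B n"
  shows "(INF n. A n - B n) = (INF n. A n) - (SUP n. B n)"
proof (rule antisym)
  show "(INF n. A n) - (SUP n. B n) \<le> (INF n. A n - B n)"
    by (intro INF_greatest ereal_minus_mono INF_lower SUP_upper) auto
  have IA: "0 \<le> (INF n. A n)" "(INF n. A n) \<le> A 0" using A0 by (auto intro: INF_greatest INF_lower)
  have IAf: "\<bar>INF n. A n\<bar> \<noteq> \<infinity>" using IA Af[of 0] by auto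
  show "(INF n. A n - B n) \<le> (INF n. A n) - (SUP n. B n)"
  proof (cases "(SUP n. B n) = \<infinity>")
    case True
    have "(INF n. A n - B n) \<le> (INF n. A 0 - B n)"
      by (intro INF_mono) (use Ad in \<open>auto intro!: ereal_minus_mono simp: decseq_def\<close>)
    also have "\<dots> = A 0 - (SUP n. B n)"
      using Af[of 0] by (subst INF_ereal_minus_right) auto
    finally show ?thesis using True Af[of 0] IAf by auto
  next
    case False
    have SBf: "\<bar>SUP n. B n\<bar> \<noteq> \<infinity>" using False B0[of 0] SUP_upper[of 0 UNIV B] by auto
    have "(\<lambda>n. A n - B n) \<longlonglongrightarrow> (INF n. A n) - (SUP n. B n)"
      by (intro tendsto_diff_ereal IAf SBf LIMSEQ_INF LIMSEQ_SUP Ad Bi)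
    moreover have "(\<lambda>n. A n - B n) \<longlonglongrightarrow> (INF n. A n - B n)"
    proof (rule LIMSEQ_INF)
      show "decseq (\<lambda>n. A n - B n)"
        using Ad Bi by (auto simp: decseq_def incseq_def intro!: ereal_minus_mono)
    qed
    ultimately show ?thesis using LIMSEQ_unique by (metis order_refl)
  qed
qed

context CE begin

lemma F_0: "F 0 = (INF n. F (1 / Suc n))"
proof -
  define f where "f n \<omega> = V \<omega> (1 / Suc n)" for n \<omega>
  have f_dec: "f n \<omega> \<le> f m \<omega>" if "\<omega> \<in> space M" "m \<le> n" for \<omega> m n
    unfolding f_def using that by (intro V_le) (auto simp: frac_le)
  have f_lim: "(\<lambda>n. f n \<omega>) \<longlonglongrightarrow> V \<omega> 0" if w: "\<omega> \<in> space M" for \<omega>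
  proof -
    have "(\<lambda>n. f n \<omega>) \<longlonglongrightarrow> (INF n. f n \<omega>)"
      by (rule LIMSEQ_INF) (auto simp: decseq_def intro: f_dec w)
    then show ?thesis using V0_seq[OF w] unfolding f_def by simp
  qed
  have f_meas: "f n \<in> borel_measurable M" for n
    unfolding f_def by (rule V_meas) auto
  have f_eq: "f n \<omega> = ereal (vr (1 / Suc n) \<omega>)" if "\<omega> \<in> space M" for n \<omega>
    unfolding f_def using that by (intro V_eq) auto
  define a where "a n = (\<integral>\<^sup>+\<omega>. e2ennreal (f n \<omega>) \<partial>M)" for n
  define b where "b n = (\<integral>\<^sup>+\<omega>. e2ennreal (- f n \<omega>) \<partial>M)" for n
  define a0 where "a0 = (\<integral>\<^sup>+\<omega>. e2ennreal (V \<omega> 0) \<partial>M)"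
  define b0 where "b0 = (\<integral>\<^sup>+\<omega>. e2ennreal (- V \<omega> 0) \<partial>M)"
  have a_fin: "a n < \<infinity>" and b_fin: "b n < \<infinity>" for n
  proof -
    have i: "integrable M (vr (1 / Suc n))" by (rule vr_int) auto
    then have n: "(\<integral>\<^sup>+ x. ennreal (norm (vr (1 / Suc n) x)) \<partial>M) < \<infinity>"
      using integrable_iff_bounded by blast
    have "a n = (\<integral>\<^sup>+\<omega>. ennreal (vr (1 / Suc n) \<omega>) \<partial>M)"
      unfolding a_def by (rule nn_integral_cong) (simp add: f_eq e2ennreal_ereal)
    also have "\<dots> \<le> (\<integral>\<^sup>+ x. ennreal (norm (vr (1 / Suc n) x)) \<partial>M)"
      by (rule nn_integral_mono) auto
    finally show "a n < \<infinity>" using n by auto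
    have "b n = (\<integral>\<^sup>+\<omega>. ennreal (- vr (1 / Suc n) \<omega>) \<partial>M)"
      unfolding b_def by (rule nn_integral_cong) (simp add: f_eq e2ennreal_ereal)
    also have "\<dots> \<le> (\<integral>\<^sup>+ x. ennreal (norm (vr (1 / Suc n) x)) \<partial>M)"
      by (rule nn_integral_mono) auto
    finally show "b n < \<infinity>" using n by auto
  qed
  have a0_eq: "a0 = (INF n. a n)"
  proof -
    have "a0 = (\<integral>\<^sup>+\<omega>. (INF n. e2ennreal (f n \<omega>)) \<partial>M)"
      unfolding a0_def
    proof (rule nn_integral_cong)
      fix \<omega> assume w: "\<omega> \<in> space M"
      have "(\<lambda>n. e2ennreal (f n \<omega>)) \<longlonglongrightarrow> (INF n. e2ennreal (f n \<omega>))"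
        by (rule LIMSEQ_INF) (auto simp: decseq_def intro!: e2ennreal_mono f_dec w)
      moreover have "(\<lambda>n. e2ennreal (f n \<omega>)) \<longlonglongrightarrow> e2ennreal (V \<omega> 0)"
        by (intro tendsto_e2ennrealI f_lim w)
      ultimately show "e2ennreal (V \<omega> 0) = (INF n. e2ennreal (f n \<omega>))"
        using LIMSEQ_unique by metis
    qed
    also have "\<dots> = (INF n. a n)"
      unfolding a_def
      by (rule nn_integral_monotone_convergence_INF_AE[where i=0])
         (use a_fin[of 0] in \<open>auto simp: a_def intro!: AE_I2 e2ennreal_mono f_dec measurable_compose[OF f_meas measurable_e2ennreal]\<close>)
    finally show ?thesis .
  qed
  have b0_eq: "b0 = (SUP n. b n)"
  proof -
    have "b0 = (\<integral>\<^sup>+\<omega>. (SUP n. e2ennreal (- f n \<omega>)) \<partial>M)"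
      unfolding b0_def
    proof (rule nn_integral_cong)
      fix \<omega> assume w: "\<omega> \<in> space M"
      have "(\<lambda>n. e2ennreal (- f n \<omega>)) \<longlonglongrightarrow> (SUP n. e2ennreal (- f n \<omega>))"
        by (rule LIMSEQ_SUP) (auto simp: incseq_def intro!: e2ennreal_mono f_dec w)
      moreover have "(\<lambda>n. e2ennreal (- f n \<omega>)) \<longlonglongrightarrow> e2ennreal (- V \<omega> 0)"
        by (intro tendsto_e2ennrealI tendsto_uminus_ereal f_lim w)
      ultimately show "e2ennreal (- V \<omega> 0) = (SUP n. e2ennreal (- f n \<omega>))"
        using LIMSEQ_unique by metis
    qed
    also have "\<dots> = (SUP n. b n)"
      unfolding b_def
      by (rule nn_integral_monotone_convergence_SUP_AE)
         (auto intro!: AE_I2 e2ennreal_mono f_dec measurable_compose[OF _ measurable_e2ennreal] f_meas)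
    finally show ?thesis .
  qed
  have Fn: "F (1 / Suc n) = enn2ereal (a n) - enn2ereal (b n)" for n
    using a_fin[of n] unfolding F_def EE_def Let_def a_def b_def f_def by auto
  have a0_fin: "a0 < \<infinity>" using a0_eq a_fin[of 0] by (metis INF_lower UNIV_I le_less_trans)
  have F0: "F 0 = enn2ereal a0 - enn2ereal b0"
    using a0_fin unfolding F_def EE_def Let_def a0_def b0_def by auto
  have "(INF n. F (1 / Suc n)) = (INF n. enn2ereal (a n)) - (SUP n. enn2ereal (b n))"
    unfolding Fn
  proof (rule ereal_INF_diff)
    show "decseq (\<lambda>n. enn2ereal (a n))"
      unfolding decseq_def a_def
      by (auto simp flip: less_eq_ennreal.rep_eq intro!: nn_integral_mono e2ennreal_mono f_dec)
    show "incseq (\<lambda>n. enn2ereal (b n))"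
      unfolding incseq_def b_def
      by (auto simp flip: less_eq_ennreal.rep_eq intro!: nn_integral_mono e2ennreal_mono f_dec)
  qed (use a_fin b_fin in \<open>auto simp: enn2ereal_fin\<close>)
  also have "\<dots> = enn2ereal a0 - enn2ereal b0"
  proof -
    have "0 \<le> (SUP n. enn2ereal (b n))" by (rule order_trans[OF _ SUP_upper[of 0]]) auto
    then show ?thesis
      unfolding a0_eq b0_eq by (simp add: Inf_ennreal.rep_eq Sup_ennreal.rep_eq image_image max_absorb2)
  qed
  finally show ?thesis using F0 by simp
qed

end

lemma EE_integrable:
  fixes Z :: "'b \<Rightarrow> ereal"
  assumes Zm: "Z \<in> borel_measurable M"
    and Zp: "(\<integral>\<^sup>+\<omega>. e2ennreal (Z \<omega>) \<partial>M) < \<infinity>"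
    and Zn: "(\<integral>\<^sup>+\<omega>. e2ennreal (- Z \<omega>) \<partial>M) < \<infinity>"
  shows "AE \<omega> in M. Z \<omega> = ereal (real_of_ereal (Z \<omega>))"
    and "integrable M (\<lambda>\<omega>. real_of_ereal (Z \<omega>))"
    and "EE M Z = ereal (\<integral>\<omega>. real_of_ereal (Z \<omega>) \<partial>M)"
proof -
  have m1: "(\<lambda>\<omega>. e2ennreal (Z \<omega>)) \<in> borel_measurable M"
    using measurable_compose[OF Zm measurable_e2ennreal] by simp
  have m2: "(\<lambda>\<omega>. e2ennreal (- Z \<omega>)) \<in> borel_measurable M"
    using measurable_compose[OF borel_measurable_uminus_eq_ereal[THEN iffD2, OF Zm] measurable_e2ennreal] by simp
  have a1: "AE \<omega> in M. e2ennreal (Z \<omega>) \<noteq> \<infinity>"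
    using Zp by (intro nn_integral_PInf_AE m1) auto
  have a2: "AE \<omega> in M. e2ennreal (- Z \<omega>) \<noteq> \<infinity>"
    using Zn by (intro nn_integral_PInf_AE m2) auto
  show ae: "AE \<omega> in M. Z \<omega> = ereal (real_of_ereal (Z \<omega>))"
    using a1 a2
  proof eventually_elim
    fix \<omega> assume "e2ennreal (Z \<omega>) \<noteq> \<infinity>" "e2ennreal (- Z \<omega>) \<noteq> \<infinity>"
    then show "Z \<omega> = ereal (real_of_ereal (Z \<omega>))"
      by (cases "Z \<omega>") auto
  qed
  have "(\<integral>\<^sup>+ \<omega>. ennreal (norm (real_of_ereal (Z \<omega>))) \<partial>M)
       = (\<integral>\<^sup>+ \<omega>. e2ennreal (Z \<omega>) + e2ennreal (- Z \<omega>) \<partial>M)"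
  proof (rule nn_integral_cong_AE)
    show "AE \<omega> in M. ennreal (norm (real_of_ereal (Z \<omega>))) = e2ennreal (Z \<omega>) + e2ennreal (- Z \<omega>)"
      using ae
    proof eventually_elim
      fix \<omega> assume e: "Z \<omega> = ereal (real_of_ereal (Z \<omega>))"
      show "ennreal (norm (real_of_ereal (Z \<omega>))) = e2ennreal (Z \<omega>) + e2ennreal (- Z \<omega>)"
      proof -
        obtain r where r: "Z \<omega> = ereal r" using e by metis
        then show ?thesis by (cases "0 \<le> r") (auto simp: e2ennreal_ereal ennreal_neg)
      qed
    qed
  qed
  also have "\<dots> = (\<integral>\<^sup>+ \<omega>. e2ennreal (Z \<omega>) \<partial>M) + (\<integral>\<^sup>+ \<omega>. e2ennreal (- Z \<omega>) \<partial>M)"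
    by (rule nn_integral_add) (use m1 m2 in auto)
  also have "\<dots> < \<infinity>" using Zp Zn by (simp add: less_top)
  finally show int: "integrable M (\<lambda>\<omega>. real_of_ereal (Z \<omega>))"
    unfolding integrable_iff_bounded using Zm by auto
  have "EE M Z = EE M (\<lambda>\<omega>. ereal (real_of_ereal (Z \<omega>)))"
    by (rule EE_cong_AE) (use ae in auto)
  also have "\<dots> = ereal (\<integral>\<omega>. real_of_ereal (Z \<omega>) \<partial>M)"
    by (rule EE_real[OF int])
  finally show "EE M Z = ereal (\<integral>\<omega>. real_of_ereal (Z \<omega>) \<partial>M)" .
qed

context CE begin

lemma Vg_meas:
  assumes g: "g \<in> borel_measurable M" "\<And>\<omega>. \<omega> \<in> space M \<Longrightarrow> 0 \<le> g \<omega>"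
  shows "(\<lambda>\<omega>. V \<omega> (g \<omega>)) \<in> borel_measurable M"
proof -
  define Q where "Q = {q::real. q \<in> \<rat> \<and> 0 < q}"
  have cQ: "countable Q" unfolding Q_def by (rule countable_subset[OF _ countable_rat]) auto
  have eq: "V \<omega> (g \<omega>) = (SUP q\<in>Q. if q < g \<omega> then V \<omega> q else V \<omega> 0)" if w: "\<omega> \<in> space M" for \<omega>
  proof (rule antisym)
    define x where "x = g \<omega>"
    have x0: "0 \<le> x" using g(2)[OF w] x_def by auto
    show "(SUP q\<in>Q. if q < g \<omega> then V \<omega> q else V \<omega> 0) \<le> V \<omega> (g \<omega>)"
      unfolding x_def[symmetric]
      by (rule SUP_least) (use x0 in \<open>auto simp: Q_def intro!: V_le[OF w]\<close>)
    show "V \<omega> (g \<omega>) \<le> (SUP q\<in>Q. if q < g \<omega> then V \<omega> q else V \<omega> 0)"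
      unfolding x_def[symmetric]
    proof (cases "x = 0")
      case True
      have "1 \<in> Q" unfolding Q_def by auto
      then show "V \<omega> x \<le> (SUP q\<in>Q. if q < x then V \<omega> q else V \<omega> 0)"
        using True by (intro SUP_upper2[of 1]) auto
    next
      case False
      then have xp: "0 < x" using x0 by auto
      show "V \<omega> x \<le> (SUP q\<in>Q. if q < x then V \<omega> q else V \<omega> 0)"
      proof (rule dense_le)
        fix y assume y: "y < V \<omega> x"
        show "y \<le> (SUP q\<in>Q. if q < x then V \<omega> q else V \<omega> 0)"
        proof (cases y)
          case (real r)
          have rl: "r < vr x \<omega>" using y real V_eq[OF w xp] by auto
          obtain d where d: "d > 0" "\<And>z. dist z x < d \<Longrightarrow> dist (vr z \<omega>) (vr x \<omega>) < vr x \<omega> - r"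
            using V_cont[OF w xp, unfolded continuous_at_eps_delta] rl unfolding vr_def
            by (metis diff_gt_0_iff_gt)
          obtain q where q: "q \<in> \<rat>" "max (x - d) 0 < q" "q < x"
            using Rats_dense_in_real[of "max (x - d) 0" x] xp d by auto
          have qQ: "q \<in> Q" using q unfolding Q_def by auto
          have "dist q x < d" using q by (auto simp: dist_real_def)
          then have "r < vr q \<omega>" using d(2)[of q] by (auto simp: dist_real_def)
          then have "y \<le> V \<omega> q" using real V_eq[OF w, of q] q by auto
          also have "\<dots> = (if q < x then V \<omega> q else V \<omega> 0)" using q by auto
          also have "\<dots> \<le> (SUP q\<in>Q. if q < x then V \<omega> q else V \<omega> 0)"
            by (rule SUP_upper[OF qQ])
          finally show ?thesis .
        qed (use y in auto)
      qed
    qed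
  qed
  have "(\<lambda>\<omega>. SUP q\<in>Q. if q < g \<omega> then V \<omega> q else V \<omega> 0) \<in> borel_measurable M"
  proof (rule borel_measurable_SUP[OF cQ])
    fix q assume "q \<in> Q"
    then have q: "0 < q" unfolding Q_def by auto
    have s: "{\<omega> \<in> space M. q < g \<omega>} \<in> sets M" using g(1) by measurable
    show "(\<lambda>\<omega>. if q < g \<omega> then V \<omega> q else V \<omega> 0) \<in> borel_measurable M"
      by (rule measurable_If[OF V_meas[OF q] V0_meas s])
  qed
  then show ?thesis
    by (rule measurable_cong[THEN iffD1, rotated]) (simp add: eq)
qed

end

context CE begin

lemma F_top:
  assumes g: "g \<in> borel_measurable M" "\<And>\<omega>. \<omega> \<in> space M \<Longrightarrow> 0 \<le> g \<omega>"
    and Zp: "(\<integral>\<^sup>+\<omega>. e2ennreal (V \<omega> (g \<omega>)) \<partial>M) < \<infinity>"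
    and Zn: "(\<integral>\<^sup>+\<omega>. e2ennreal (- V \<omega> (g \<omega>)) \<partial>M) < \<infinity>"
  shows "\<exists>K>0. EE M (\<lambda>\<omega>. V \<omega> (g \<omega>)) < F K"
proof -
  define Zr where "Zr \<omega> = real_of_ereal (V \<omega> (g \<omega>))" for \<omega>
  have Zm: "(\<lambda>\<omega>. V \<omega> (g \<omega>)) \<in> borel_measurable M" by (rule Vg_meas[OF g])
  note E = EE_integrable[OF Zm Zp Zn, folded Zr_def]
  have ae: "AE \<omega> in M. V \<omega> (g \<omega>) = ereal (Zr \<omega>)" using E(1) by simp
  have iZ: "integrable M Zr" using E(2) by (simp add: Zr_def[abs_def])
  have EZ: "EE M (\<lambda>\<omega>. V \<omega> (g \<omega>)) = ereal (integral\<^sup>L M Zr)" using E(3) by (simp add: Zr_def[abs_def])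
  have less: "Zr \<omega> < vr K \<omega>" if w: "\<omega> \<in> space M" "V \<omega> (g \<omega>) = ereal (Zr \<omega>)" "g \<omega> < K" for \<omega> K
  proof -
    have K: "0 < K" using g(2)[OF w(1)] w(3) by auto
    have "V \<omega> (g \<omega>) < V \<omega> K" by (rule V_mono) (use g(2)[OF w(1)] w in auto)
    then show ?thesis using w(2) V_eq[OF w(1) K] by auto
  qed
  have "\<exists>n. 0 < (\<integral>\<omega>. max (vr (real (Suc n)) \<omega> - Zr \<omega>) 0 \<partial>M)"
  proof (rule ccontr)
    assume "\<not> ?thesis"
    then have h: "(\<integral>\<omega>. max (vr (real (Suc n)) \<omega> - Zr \<omega>) 0 \<partial>M) \<le> 0" for n
      by (metis not_less)
    have int: "integrable M (\<lambda>\<omega>. max (vr (real (Suc n)) \<omega> - Zr \<omega>) 0)" for n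
      by (intro integrable_max Bochner_Integration.integrable_diff vr_int iZ) auto
    have "AE \<omega> in M. max (vr (real (Suc n)) \<omega> - Zr \<omega>) 0 = 0" for n
    proof -
      have "0 \<le> (\<integral>\<omega>. max (vr (real (Suc n)) \<omega> - Zr \<omega>) 0 \<partial>M)"
        by (rule integral_nonneg_AE) auto
      then have "(\<integral>\<omega>. max (vr (real (Suc n)) \<omega> - Zr \<omega>) 0 \<partial>M) = 0"
        using h[of n] by linarith
      then show ?thesis using integral_nonneg_eq_0_iff_AE[OF int] by auto
    qed
    then have "AE \<omega> in M. \<forall>n. max (vr (real (Suc n)) \<omega> - Zr \<omega>) 0 = 0"
      by (simp add: AE_all_countable)
    then have "AE \<omega> in M. False"
      using ae AE_space
    proof eventually_elim
      fix \<omega> assume a: "\<forall>n. max (vr (real (Suc n)) \<omega> - Zr \<omega>) 0 = 0"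
        and e: "V \<omega> (g \<omega>) = ereal (Zr \<omega>)" and w: "\<omega> \<in> space M"
      obtain n where n: "g \<omega> < real n" using reals_Archimedean2 by auto
      have "Zr \<omega> < vr (real (Suc n)) \<omega>" by (rule less[OF w e]) (use n in auto)
      then show False using a[rule_format, of n] by (auto simp: max_def split: if_splits)
    qed
    then show False by simp
  qed
  then obtain n1 where n1: "0 < (\<integral>\<omega>. max (vr (real (Suc n1)) \<omega> - Zr \<omega>) 0 \<partial>M)" by auto
  define K1 where "K1 = real (Suc n1)"
  have K1: "0 < K1" unfolding K1_def by auto
  define \<delta> where "\<delta> = (\<integral>\<omega>. max (vr K1 \<omega> - Zr \<omega>) 0 \<partial>M)"
  have d: "0 < \<delta>" using n1 unfolding \<delta>_def K1_def .
  have lim: "(\<lambda>n. \<integral>\<omega>. min (vr (K1 + real n) \<omega> - Zr \<omega>) 0 \<partial>M) \<longlonglongrightarrow> integral\<^sup>L M (\<lambda>_. 0::real)"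
  proof (rule integral_dominated_convergence[where w="\<lambda>\<omega>. \<bar>vr K1 \<omega> - Zr \<omega>\<bar>"])
    show "(\<lambda>_. 0::real) \<in> borel_measurable M" by auto
    show "(\<lambda>\<omega>. min (vr (K1 + real n) \<omega> - Zr \<omega>) 0) \<in> borel_measurable M" for n
      using K1 iZ by (intro borel_measurable_min borel_measurable_diff vr_meas) auto
    show "integrable M (\<lambda>\<omega>. \<bar>vr K1 \<omega> - Zr \<omega>\<bar>)"
      using K1 by (intro integrable_abs Bochner_Integration.integrable_diff vr_int iZ)
    show "AE \<omega> in M. (\<lambda>n. min (vr (K1 + real n) \<omega> - Zr \<omega>) 0) \<longlonglongrightarrow> 0"
      using ae AE_space
    proof eventually_elim
      fix \<omega> assume e: "V \<omega> (g \<omega>) = ereal (Zr \<omega>)" and w: "\<omega> \<in> space M"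
      obtain N where N: "g \<omega> < real N" using reals_Archimedean2 by auto
      have "\<forall>\<^sub>F n in sequentially. min (vr (K1 + real n) \<omega> - Zr \<omega>) 0 = 0"
        unfolding eventually_sequentially
      proof (intro exI[of _ N] allI impI)
        fix n assume "N \<le> n"
        then have "g \<omega> < K1 + real n" using N K1 by auto
        then have "Zr \<omega> < vr (K1 + real n) \<omega>" by (rule less[OF w e])
        then show "min (vr (K1 + real n) \<omega> - Zr \<omega>) 0 = 0" by auto
      qed
      then show "(\<lambda>n. min (vr (K1 + real n) \<omega> - Zr \<omega>) 0) \<longlonglongrightarrow> 0"
        by (rule tendsto_eventually)
    qed
    show "AE \<omega> in M. norm (min (vr (K1 + real n) \<omega> - Zr \<omega>) 0) \<le> \<bar>vr K1 \<omega> - Zr \<omega>\<bar>" for n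
    proof (rule AE_I2)
      fix \<omega> assume w: "\<omega> \<in> space M"
      have "vr K1 \<omega> \<le> vr (K1 + real n) \<omega>" using K1 by (intro vr_le w) auto
      then show "norm (min (vr (K1 + real n) \<omega> - Zr \<omega>) 0) \<le> \<bar>vr K1 \<omega> - Zr \<omega>\<bar>" by auto
    qed
  qed
  then have "\<forall>\<^sub>F n in sequentially. - \<delta> < (\<integral>\<omega>. min (vr (K1 + real n) \<omega> - Zr \<omega>) 0 \<partial>M)"
    using d by (intro order_tendstoD(1)) auto
  then obtain n2 where n2: "- \<delta> < (\<integral>\<omega>. min (vr (K1 + real n2) \<omega> - Zr \<omega>) 0 \<partial>M)"
    by (auto simp: eventually_sequentially)
  define K where "K = K1 + real n2"
  have K: "0 < K" "K1 \<le> K" using K1 unfolding K_def by auto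
  have iK: "integrable M (vr K)" using K by (intro vr_int) auto
  have iK1: "integrable M (vr K1)" using K1 by (intro vr_int) auto
  have eq1: "(\<integral>\<omega>. vr K \<omega> - Zr \<omega> \<partial>M) = (\<integral>\<omega>. max (vr K \<omega> - Zr \<omega>) 0 + min (vr K \<omega> - Zr \<omega>) 0 \<partial>M)"
    by (rule Bochner_Integration.integral_cong) auto
  have eq2: "(\<integral>\<omega>. max (vr K \<omega> - Zr \<omega>) 0 + min (vr K \<omega> - Zr \<omega>) 0 \<partial>M)
     = (\<integral>\<omega>. max (vr K \<omega> - Zr \<omega>) 0 \<partial>M) + (\<integral>\<omega>. min (vr K \<omega> - Zr \<omega>) 0 \<partial>M)"
    by (rule Bochner_Integration.integral_add) (use iK iZ in \<open>auto intro!: integrable_max integrable_min\<close>)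
  have ge: "(\<integral>\<omega>. max (vr K \<omega> - Zr \<omega>) 0 \<partial>M) \<ge> \<delta>"
    unfolding \<delta>_def
    by (rule integral_mono) (use iK iK1 iZ K K1 in \<open>auto intro!: integrable_max, smt (verit) vr_le\<close>)
  have "0 < (\<integral>\<omega>. vr K \<omega> - Zr \<omega> \<partial>M)" using n2 eq1 eq2 ge unfolding K_def by linarith
  then have "integral\<^sup>L M Zr < integral\<^sup>L M (vr K)"
    using Bochner_Integration.integral_diff[OF iK iZ] by simp
  then show ?thesis using EZ F_eq[OF K(1)] K by (intro exI[of _ K]) auto
qed

lemma CE_unique:
  assumes g: "g \<in> borel_measurable M" "\<And>\<omega>. \<omega> \<in> space M \<Longrightarrow> 0 \<le> g \<omega>"
    and Zp: "(\<integral>\<^sup>+\<omega>. e2ennreal (V \<omega> (g \<omega>)) \<partial>M) < \<infinity>"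
    and Zn: "(\<integral>\<^sup>+\<omega>. e2ennreal (- V \<omega> (g \<omega>)) \<partial>M) < \<infinity>"
  shows "\<exists>!c. 0 \<le> c \<and> F c = EE M (\<lambda>\<omega>. V \<omega> (g \<omega>))"
proof -
  define Zr where "Zr \<omega> = real_of_ereal (V \<omega> (g \<omega>))" for \<omega>
  have Zm: "(\<lambda>\<omega>. V \<omega> (g \<omega>)) \<in> borel_measurable M" by (rule Vg_meas[OF g])
  note E = EE_integrable[OF Zm Zp Zn, folded Zr_def]
  have EZ: "EE M (\<lambda>\<omega>. V \<omega> (g \<omega>)) = ereal (integral\<^sup>L M Zr)" using E(3) by (simp add: Zr_def[abs_def])
  define z where "z = integral\<^sup>L M Zr"
  have F0: "F 0 \<le> EE M (\<lambda>\<omega>. V \<omega> (g \<omega>))"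
    unfolding F_def by (rule EE_mono) (auto intro: V_le g(2))
  obtain K where K: "0 < K" "EE M (\<lambda>\<omega>. V \<omega> (g \<omega>)) < F K" using F_top[OF g Zp Zn] by auto
  have ex: "\<exists>c\<ge>0. F c = EE M (\<lambda>\<omega>. V \<omega> (g \<omega>))"
  proof (cases "F 0 = EE M (\<lambda>\<omega>. V \<omega> (g \<omega>))")
    case True then show ?thesis by (intro exI[of _ 0]) auto
  next
    case False
    then have "F 0 < EE M (\<lambda>\<omega>. V \<omega> (g \<omega>))" using F0 by auto
    then obtain n where n: "F (1 / Suc n) < EE M (\<lambda>\<omega>. V \<omega> (g \<omega>))"
      unfolding F_0 by (auto simp: INF_less_iff)
    define e where "e = 1 / real (Suc n)"
    have e: "0 < e" unfolding e_def by auto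
    have eK: "e < K"
    proof (rule ccontr)
      assume "\<not> e < K"
      then have "F K \<le> F e" using K by (intro F_le) auto
      then show False using n K unfolding e_def by auto
    qed
    have "integral\<^sup>L M (vr e) \<le> z" using n F_eq[OF e] EZ unfolding z_def e_def by auto
    moreover have "z \<le> integral\<^sup>L M (vr K)" using K F_eq[OF K(1)] EZ unfolding z_def by auto
    moreover have "continuous_on {e..K} (\<lambda>x. integral\<^sup>L M (vr x))"
      by (rule continuous_at_imp_continuous_on) (use e in \<open>auto intro!: Fr_cont\<close>)
    ultimately obtain c where c: "e \<le> c" "c \<le> K" "integral\<^sup>L M (vr c) = z"
      using IVT'[of "\<lambda>x. integral\<^sup>L M (vr x)" e z K] eK by auto
    have "F c = EE M (\<lambda>\<omega>. V \<omega> (g \<omega>))" using F_eq[of c] c e EZ unfolding z_def by auto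
    then show ?thesis using c e by (intro exI[of _ c]) auto
  qed
  show ?thesis
  proof (rule ex_ex1I)
    show "\<exists>c. 0 \<le> c \<and> F c = EE M (\<lambda>\<omega>. V \<omega> (g \<omega>))" using ex by auto
  next
    fix c d assume c: "0 \<le> c \<and> F c = EE M (\<lambda>\<omega>. V \<omega> (g \<omega>))" and d: "0 \<le> d \<and> F d = EE M (\<lambda>\<omega>. V \<omega> (g \<omega>))"
    show "c = d"
    proof (rule ccontr)
      assume "c \<noteq> d"
      then have "c < d \<or> d < c" by auto
      then show False using F_less[of c d] F_less[of d c] c d by auto
    qed
  qed
qed

end

lemma Polish_sc:
  assumes "Polish_space X" shows "second_countable X"
proof -
  obtain M d where Md: "Metric_space M d" and X: "X = Metric_space.mtopology M d"
    using assms unfolding Polish_space_def completely_metrizable_space_def by blast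
  interpret Metric_space M d by (rule Md)
  obtain C where C: "countable C" "C \<subseteq> topspace X" "X closure_of C = topspace X"
    using assms unfolding Polish_space_def separable_space_def by blast
  define B where "B = (\<lambda>(c, n). mball c (1 / Suc n)) ` (C \<times> (UNIV :: nat set))"
  show ?thesis
    unfolding second_countable_def
  proof (intro exI[of _ B] conjI allI impI ballI)
    show "countable B" unfolding B_def using C(1) by auto
    show "openin X V" if "V \<in> B" for V using that unfolding B_def X by auto
    fix U x assume Ux: "openin X U \<and> x \<in> U"
    then obtain r where r: "r > 0" "mball x r \<subseteq> U"
      unfolding X openin_mtopology by blast
    have xM: "x \<in> M" using Ux unfolding X openin_mtopology by blast
    obtain n where n: "1 / real (Suc n) < r / 2" using r(1) nat_approx_posE[of "r/2"] by auto
    have "x \<in> X closure_of C" using C(3) xM X by auto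
    then obtain c where c: "c \<in> C" "c \<in> mball x (1 / Suc n)"
      unfolding in_closure_of using xM by (metis X centre_in_mball_iff of_nat_0_less_iff openin_mball zero_less_Suc zero_less_divide_1_iff)
    have cM: "c \<in> M" using c by auto
    show "\<exists>V\<in>B. x \<in> V \<and> V \<subseteq> U"
    proof (intro bexI[of _ "mball c (1 / Suc n)"] conjI)
      show "mball c (1 / real (Suc n)) \<in> B" unfolding B_def using c by auto
      show "x \<in> mball c (1 / real (Suc n))" using c xM commute by auto
      have "mball c (1 / real (Suc n)) \<subseteq> mball x r"
        by (rule mball_subset) (use c n xM commute in auto)
      then show "mball c (1 / real (Suc n)) \<subseteq> U" using r by auto
    qed
  qed
qed

lemma second_countableE:
  assumes "second_countable X"
  obtains B where "countable B" "\<And>V. V \<in> B \<Longrightarrow> openin X V"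
    "\<And>U x. openin X U \<Longrightarrow> x \<in> U \<Longrightarrow> \<exists>V\<in>B. x \<in> V \<and> V \<subseteq> U"
proof -
  from assms obtain B where "countable B" "\<forall>V \<in> B. openin X V"
     "\<forall>U x. openin X U \<and> x \<in> U \<longrightarrow> (\<exists>V \<in> B. x \<in> V \<and> V \<subseteq> U)"
    unfolding second_countable_def by (elim exE conjE)
  then show ?thesis using that by simp
qed

lemma topspace_Om: "topspace (Om X s) = (\<Pi>\<^sub>E i\<in>{1..s}. topspace (X i))"
  unfolding Om_def by (simp add: topspace_product_topology)

lemma sets_borel_of: "sets (borel_of Y) = sigma_sets (topspace Y) {U. openin Y U}"
  unfolding borel_of_def by (rule sets_measure_of) (auto dest: openin_subset)

lemma space_borel_of: "space (borel_of Y) = topspace Y"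
  unfolding borel_of_def by (rule space_measure_of) (auto dest: openin_subset)

lemma open_borel_of: "openin Y U \<Longrightarrow> U \<in> sets (borel_of Y)"
  unfolding sets_borel_of by auto

definition rect :: "(nat \<Rightarrow> 'a topology) \<Rightarrow> nat \<Rightarrow> (nat \<Rightarrow> 'a) set \<Rightarrow> 'a set \<Rightarrow> (nat \<Rightarrow> 'a) set" where
  "rect X s A B = {f \<in> topspace (Om X (Suc s)). restrict f {1..s} \<in> A \<and> f (Suc s) \<in> B}"

lemma Om_Suc_restrict:
  assumes "f \<in> topspace (Om X (Suc s))"
  shows "restrict f {1..s} \<in> topspace (Om X s)" "f (Suc s) \<in> topspace (X (Suc s))"
  using assms unfolding topspace_Om by (auto simp: PiE_iff)

lemma Om_upd:
  assumes "\<omega> \<in> topspace (Om X s)"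
  shows "fun_upd \<omega> (Suc s) x \<in> topspace (Om X (Suc s)) \<longleftrightarrow> x \<in> topspace (X (Suc s))"
    and "restrict (fun_upd \<omega> (Suc s) x) {1..s} = \<omega>"
  using assms unfolding topspace_Om
  by (auto simp: PiE_iff extensional_def restrict_def fun_eq_iff)

lemma Om_decomp:
  assumes "f \<in> topspace (Om X (Suc s))"
  shows "f = fun_upd (restrict f {1..s}) (Suc s) (f (Suc s))"
  using assms unfolding topspace_Om by (auto simp: PiE_iff extensional_def restrict_def fun_eq_iff)

lemma rect_open:
  assumes "openin (Om X s) A" "openin (X (Suc s)) B"
  shows "openin (Om X (Suc s)) (rect X s A B)"
proof -
  have c1: "continuous_map (Om X (Suc s)) (Om X s) (\<lambda>f. restrict f {1..s})"
    unfolding Om_def continuous_map_componentwise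
    by (auto intro!: continuous_map_product_projection)
  have c2: "continuous_map (Om X (Suc s)) (X (Suc s)) (\<lambda>f. f (Suc s))"
    unfolding Om_def by (rule continuous_map_product_projection) auto
  have "rect X s A B = {f \<in> topspace (Om X (Suc s)). restrict f {1..s} \<in> A} \<inter>
                       {f \<in> topspace (Om X (Suc s)). f (Suc s) \<in> B}"
    unfolding rect_def by auto
  also have "openin (Om X (Suc s)) \<dots>"
    by (intro openin_Int openin_continuous_map_preimage[OF c1 assms(1)]
        openin_continuous_map_preimage[OF c2 assms(2)])
  finally show ?thesis .
qed

lemma rect_base:
  assumes BA: "\<And>U x. openin (Om X s) U \<Longrightarrow> x \<in> U \<Longrightarrow> \<exists>V\<in>\<A>. x \<in> V \<and> V \<subseteq> U"
    and BB: "\<And>U x. openin (X (Suc s)) U \<Longrightarrow> x \<in> U \<Longrightarrow> \<exists>V\<in>\<B>. x \<in> V \<and> V \<subseteq> U"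
    and W: "openin (Om X (Suc s)) W" "f \<in> W"
  shows "\<exists>A\<in>\<A>. \<exists>B\<in>\<B>. f \<in> rect X s A B \<and> rect X s A B \<subseteq> W"
proof -
  obtain U where U: "finite {i \<in> {1..Suc s}. U i \<noteq> topspace (X i)}"
    "\<forall>i\<in>{1..Suc s}. openin (X i) (U i)" "f \<in> Pi\<^sub>E {1..Suc s} U" "Pi\<^sub>E {1..Suc s} U \<subseteq> W"
    using W unfolding Om_def openin_product_topology_alt by blast
  have o1: "openin (Om X s) (Pi\<^sub>E {1..s} U)"
    unfolding Om_def using U(2) by (subst openin_PiE) auto
  have f1: "restrict f {1..s} \<in> Pi\<^sub>E {1..s} U" using U(3) by auto
  obtain A where A: "A \<in> \<A>" "restrict f {1..s} \<in> A" "A \<subseteq> Pi\<^sub>E {1..s} U"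
    using BA[OF o1 f1] by blast
  have o2: "openin (X (Suc s)) (U (Suc s))" using U(2) by auto
  have f2: "f (Suc s) \<in> U (Suc s)" using U(3) by auto
  obtain B where B: "B \<in> \<B>" "f (Suc s) \<in> B" "B \<subseteq> U (Suc s)"
    using BB[OF o2 f2] by blast
  have fW: "f \<in> topspace (Om X (Suc s))" using W openin_subset by blast
  show ?thesis
  proof (intro bexI[OF _ A(1)] bexI[OF _ B(1)] conjI)
    show "f \<in> rect X s A B" unfolding rect_def using fW A B by auto
    show "rect X s A B \<subseteq> W"
    proof
      fix g assume g: "g \<in> rect X s A B"
      then have g1: "g \<in> topspace (Om X (Suc s))" "restrict g {1..s} \<in> A" "g (Suc s) \<in> B"
        unfolding rect_def by auto
      have gt: "g \<in> topspace (Om X (Suc s))" "restrict g {1..s} \<in> Pi\<^sub>E {1..s} U" "g (Suc s) \<in> U (Suc s)"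
        using g1 subsetD[OF A(3) g1(2)] subsetD[OF B(3) g1(3)] by auto
      have "g \<in> Pi\<^sub>E {1..Suc s} U"
      proof -
        have "g i \<in> U i" if "i \<in> {1..Suc s}" for i
        proof (cases "i = Suc s")
          case True then show ?thesis using gt(3) by simp
        next
          case False then have "i \<in> {1..s}" using that by auto
          then show ?thesis using gt(2) by (auto simp: PiE_iff)
        qed
        moreover have "g \<in> extensional {1..Suc s}" using gt(1) unfolding topspace_Om by (auto simp: PiE_iff)
        ultimately show ?thesis by (auto simp: PiE_iff)
      qed
      then show "g \<in> W" using U(4) by auto
    qed
  qed
qed

lemma Om_sc: "(\<forall>t\<in>{1..n}. second_countable (X t)) \<Longrightarrow> second_countable (Om X n)"
proof (induction n)
  case 0
  have ts: "topspace (Om X 0) = {\<lambda>_. undefined}" unfolding topspace_Om by simp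
  show ?case
    unfolding second_countable_def
  proof (intro exI[of _ "{topspace (Om X 0)}"] conjI allI impI ballI)
    fix U x assume "openin (Om X 0) U \<and> x \<in> U"
    then have U: "U \<subseteq> topspace (Om X 0)" "x \<in> U" using openin_subset by blast+
    then have "U = topspace (Om X 0)" unfolding ts by blast
    then show "\<exists>V\<in>{topspace (Om X 0)}. x \<in> V \<and> V \<subseteq> U" using \<open>x \<in> U\<close> by auto
  qed auto
next
  case (Suc n)
  have p: "\<forall>t\<in>{1..n}. second_countable (X t)" using Suc.prems by simp
  have "second_countable (Om X n)" using Suc.IH[OF p] .
  then obtain \<A> where A: "countable \<A>" "\<And>V. V \<in> \<A> \<Longrightarrow> openin (Om X n) V"
      "\<And>U x. openin (Om X n) U \<Longrightarrow> x \<in> U \<Longrightarrow> \<exists>V\<in>\<A>. x \<in> V \<and> V \<subseteq> U"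
    by (rule second_countableE) blast
  have "second_countable (X (Suc n))" using Suc.prems by simp
  then obtain \<B> where B: "countable \<B>" "\<And>V. V \<in> \<B> \<Longrightarrow> openin (X (Suc n)) V"
      "\<And>U x. openin (X (Suc n)) U \<Longrightarrow> x \<in> U \<Longrightarrow> \<exists>V\<in>\<B>. x \<in> V \<and> V \<subseteq> U"
    by (rule second_countableE) blast
  show ?case
    unfolding second_countable_def
  proof (intro exI[of _ "(\<lambda>(A, B). rect X n A B) ` (\<A> \<times> \<B>)"] conjI allI impI ballI)
    show "countable ((\<lambda>(A, B). rect X n A B) ` (\<A> \<times> \<B>))"
      by (intro countable_image countable_SIGMA A(1) B(1))
    show "openin (Om X (Suc n)) V" if V: "V \<in> (\<lambda>(A, B). rect X n A B) ` (\<A> \<times> \<B>)" for V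
    proof -
      obtain A' B' where "A' \<in> \<A>" "B' \<in> \<B>" "V = rect X n A' B'" using V by fastforce
      then show ?thesis using rect_open[OF A(2) B(2)] by simp
    qed
    fix U x assume Ux: "openin (Om X (Suc n)) U \<and> x \<in> U"
    obtain A' B' where AB: "A' \<in> \<A>" "B' \<in> \<B>" "x \<in> rect X n A' B'" "rect X n A' B' \<subseteq> U"
      using rect_base[OF A(3) B(3), where W=U and f=x] Ux by blast
    have mem: "rect X n A' B' \<in> (\<lambda>(A, B). rect X n A B) ` (\<A> \<times> \<B>)"
      using AB(1,2) by (auto intro!: image_eqI[of _ _ "(A', B')"])
    show "\<exists>V\<in>(\<lambda>(A, B). rect X n A B) ` (\<A> \<times> \<B>). x \<in> V \<and> V \<subseteq> U"
      by (rule bexI[OF _ mem]) (use AB(3,4) in blast)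
  qed
qed

definition Rects :: "(nat \<Rightarrow> 'a topology) \<Rightarrow> nat \<Rightarrow> (nat \<Rightarrow> 'a) set set" where
  "Rects X s = {rect X s A B | A B. A \<in> sets (borel_of (Om X s)) \<and> B \<in> sets (borel_of (X (Suc s)))}"

lemma borel_Om_Suc_sub:
  assumes "second_countable (Om X s)" "second_countable (X (Suc s))"
  shows "sets (borel_of (Om X (Suc s))) \<subseteq> sigma_sets (topspace (Om X (Suc s))) (Rects X s)"
  unfolding sets_borel_of
proof (rule sigma_sets_mono, safe)
  fix W assume W: "openin (Om X (Suc s)) W"
  obtain \<A> where A: "countable \<A>" "\<And>V. V \<in> \<A> \<Longrightarrow> openin (Om X s) V"
      "\<And>U x. openin (Om X s) U \<Longrightarrow> x \<in> U \<Longrightarrow> \<exists>V\<in>\<A>. x \<in> V \<and> V \<subseteq> U"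
    using assms(1) by (rule second_countableE) blast
  obtain \<B> where B: "countable \<B>" "\<And>V. V \<in> \<B> \<Longrightarrow> openin (X (Suc s)) V"
      "\<And>U x. openin (X (Suc s)) U \<Longrightarrow> x \<in> U \<Longrightarrow> \<exists>V\<in>\<B>. x \<in> V \<and> V \<subseteq> U"
    using assms(2) by (rule second_countableE) blast
  define C where "C = {R \<in> (\<lambda>(A, B). rect X s A B) ` (\<A> \<times> \<B>). R \<subseteq> W}"
  have "W = \<Union> C"
  proof
    show "W \<subseteq> \<Union> C"
    proof
      fix f assume "f \<in> W"
      then obtain A B where "A \<in> \<A>" "B \<in> \<B>" "f \<in> rect X s A B" "rect X s A B \<subseteq> W"
        using rect_base[OF A(3) B(3) W] by blast
      then show "f \<in> \<Union> C" unfolding C_def by blast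
    qed
    show "\<Union> C \<subseteq> W" unfolding C_def by auto
  qed
  also have "\<Union> C \<in> sigma_sets (topspace (Om X (Suc s))) (Rects X s)"
  proof (rule sigma_sets_UNION)
    show "countable C" unfolding C_def using A(1) B(1) by auto
    fix R assume "R \<in> C"
    then obtain A B where "A \<in> \<A>" "B \<in> \<B>" "R = rect X s A B" unfolding C_def by auto
    then have "R \<in> Rects X s" unfolding Rects_def using A(2) B(2) by (auto intro!: open_borel_of)
    then show "R \<in> sigma_sets (topspace (Om X (Suc s))) (Rects X s)" by auto
  qed
  finally show "W \<in> sigma_sets (topspace (Om X (Suc s))) (Rects X s)" .
qed

lemma space_univ_space: "space (univ_space Y) = topspace Y"
  unfolding univ_space_def by (rule space_measure_of) (auto simp: univ_sets_def)

lemma sets_univ_space: "sets (univ_space Y) = sigma_sets (topspace Y) (univ_sets Y)"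
  unfolding univ_space_def by (rule sets_measure_of) (auto simp: univ_sets_def)

lemma probsD:
  assumes "P \<in> probs Y"
  shows "prob_space P" "sets P = sets (borel_of Y)" "space P = topspace Y"
    "prob_space (completion P)" "space (completion P) = topspace Y"
  using assms prob_space.prob_space_completion unfolding probs_def by auto

lemma univ_sub: "P \<in> probs Y \<Longrightarrow> univ_sets Y \<subseteq> sets (completion P)"
  unfolding univ_sets_def by auto

lemma univ_meas:
  assumes P: "P \<in> probs Y" and f: "f \<in> measurable (univ_space Y) N"
  shows "f \<in> measurable (completion P) N"
proof (rule measurable_from_subalg[OF _ f])
  show "subalgebra (completion P) (univ_space Y)"
    unfolding subalgebra_def
  proof
    show "space (univ_space Y) = space (completion P)"
      using probsD(5)[OF P] space_univ_space by simp
    have "sigma_algebra (topspace Y) (sets (completion P))"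
      using sets.sigma_algebra_axioms[of "completion P"] probsD(5)[OF P] by simp
    then show "sets (univ_space Y) \<subseteq> sets (completion P)"
      unfolding sets_univ_space by (rule sigma_algebra.sigma_sets_subset) (rule univ_sub[OF P])
  qed
qed

lemma qs_AE:
  assumes "qs Y Qs Prop" "P \<in> Qs" "P \<in> probs Y"
  shows "AE \<omega> in completion P. Prop \<omega>"
proof -
  obtain N where N: "N \<in> univ_sets Y" "emeasure (completion P) N = 0" "{\<omega>\<in>topspace Y. \<not> Prop \<omega>} \<subseteq> N"
    using assms(1,2) unfolding qs_def by blast
  show ?thesis
    by (rule AE_I[of _ _ N]) (use N univ_sub[OF assms(3)] probsD(5)[OF assms(3)] in auto)
qed

lemma Int_stable_Rects: "Int_stable (Rects X s)"
  unfolding Int_stable_def Rects_def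
proof (safe)
  fix A B A' B' assume "A \<in> sets (borel_of (Om X s))" "B \<in> sets (borel_of (X (Suc s)))"
    "A' \<in> sets (borel_of (Om X s))" "B' \<in> sets (borel_of (X (Suc s)))"
  then show "\<exists>A'' B''. rect X s A B \<inter> rect X s A' B' = rect X s A'' B'' \<and>
     A'' \<in> sets (borel_of (Om X s)) \<and> B'' \<in> sets (borel_of (X (Suc s)))"
    by (intro exI[of _ "A \<inter> A'"] exI[of _ "B \<inter> B'"]) (auto simp: rect_def)
qed

lemma Rects_Pow: "Rects X s \<subseteq> Pow (topspace (Om X (Suc s)))"
  unfolding Rects_def rect_def by auto

lemma borel_of_sub: "A \<in> sets (borel_of Y) \<Longrightarrow> A \<subseteq> topspace Y"
  using sets.sets_into_space[of A "borel_of Y"] unfolding space_borel_of by simp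

lemma pemeq: "prob_space M \<Longrightarrow> emeasure M A = ennreal (measure M A)"
  by (simp add: finite_measure.emeasure_eq_measure prob_space_def)

lemma kcomp_probs:
  assumes P: "P \<in> probs (Om X s)" and p: "SK X (Suc s) p"
    and sc: "second_countable (Om X s)" "second_countable (X (Suc s))"
  shows "kcomp X (Suc s) P p \<in> probs (Om X (Suc s))"
proof -
  define \<Omega> where "\<Omega> = topspace (Om X (Suc s))"
  define \<Omega>0 where "\<Omega>0 = topspace (Om X s)"
  define T where "T = topspace (X (Suc s))"
  define M0 where "M0 = completion P"
  define sec where "sec \<omega> A = {x \<in> T. fun_upd \<omega> (Suc s) x \<in> A}" for \<omega> A
  define h where "h A \<omega> = emeasure (p \<omega>) (sec \<omega> A)" for A \<omega>
  have M0: "prob_space M0" "space M0 = \<Omega>0" using probsD[OF P] unfolding M0_def \<Omega>0_def by auto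
  have pw: "p \<omega> \<in> probs (X (Suc s))" if "\<omega> \<in> \<Omega>0" for \<omega>
    using p that unfolding SK_def \<Omega>0_def by auto
  have pw': "prob_space (p \<omega>)" "sets (p \<omega>) = sets (borel_of (X (Suc s)))" "space (p \<omega>) = T"
    if "\<omega> \<in> \<Omega>0" for \<omega> using probsD[OF pw[OF that]] unfolding T_def by auto
  have SKm: "(\<lambda>\<omega>. measure (p \<omega>) B) \<in> borel_measurable M0" if "B \<in> sets (borel_of (X (Suc s)))" for B
    using p that univ_meas[OF P] unfolding SK_def M0_def by auto
  have upd: "fun_upd \<omega> (Suc s) x \<in> \<Omega> \<longleftrightarrow> x \<in> T" "restrict (fun_upd \<omega> (Suc s) x) {1..s} = \<omega>"
    if "\<omega> \<in> \<Omega>0" for \<omega> x using Om_upd[of \<omega> X s x] that unfolding \<Omega>_def \<Omega>0_def T_def by auto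
  define D where "D A \<longleftrightarrow> (\<forall>\<omega>\<in>\<Omega>0. sec \<omega> A \<in> sets (borel_of (X (Suc s)))) \<and> h A \<in> borel_measurable M0" for A
  have DA: "D A" if A: "A \<in> sigma_sets \<Omega> (Rects X s)" for A
    using Int_stable_Rects Rects_Pow[of X s, folded \<Omega>_def] A
  proof (induction rule: sigma_sets_induct_disjoint)
    case (basic A)
    then obtain A1 B1 where A: "A = rect X s A1 B1" "A1 \<in> sets (borel_of (Om X s))" "B1 \<in> sets (borel_of (X (Suc s)))"
      unfolding Rects_def by auto
    have B1T: "B1 \<subseteq> T" using borel_of_sub[OF A(3)] unfolding T_def .
    have secA: "sec \<omega> A = (if \<omega> \<in> A1 then B1 else {})" if w: "\<omega> \<in> \<Omega>0" for \<omega>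
      unfolding sec_def A(1) rect_def using upd[OF w] B1T by (auto simp flip: \<Omega>_def)
    show ?case
      unfolding D_def
    proof
      show "\<forall>\<omega>\<in>\<Omega>0. sec \<omega> A \<in> sets (borel_of (X (Suc s)))" using secA A(3) by auto
      have "(\<lambda>\<omega>. indicator A1 \<omega> * ennreal (measure (p \<omega>) B1)) \<in> borel_measurable M0"
      proof (intro borel_measurable_times_ennreal borel_measurable_indicator measurable_compose[OF SKm[OF A(3)]])
        show "A1 \<in> sets M0" using A(2) probsD(2)[OF P] unfolding M0_def by auto
      qed auto
      moreover have "h A \<omega> = indicator A1 \<omega> * ennreal (measure (p \<omega>) B1)" if "\<omega> \<in> space M0" for \<omega>
      proof -
        have w: "\<omega> \<in> \<Omega>0" using that M0 by auto
        show ?thesis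
          unfolding h_def secA[OF w]
          using pemeq[OF pw'(1)[OF w]] by (auto simp: indicator_def)
      qed
      ultimately show "h A \<in> borel_measurable M0"
        by (rule measurable_cong[THEN iffD2, rotated]) 
    qed
  next
    case empty
    show ?case unfolding D_def h_def sec_def by auto
  next
    case (compl A)
    have secC: "sec \<omega> (\<Omega> - A) = T - sec \<omega> A" if w: "\<omega> \<in> \<Omega>0" for \<omega>
      unfolding sec_def using upd[OF w] by auto
    show ?case
      unfolding D_def
    proof
      show "\<forall>\<omega>\<in>\<Omega>0. sec \<omega> (\<Omega> - A) \<in> sets (borel_of (X (Suc s)))"
      proof
        fix \<omega> assume w: "\<omega> \<in> \<Omega>0"
        have "T \<in> sets (borel_of (X (Suc s)))" using open_borel_of[OF openin_topspace] T_def by simp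
        then show "sec \<omega> (\<Omega> - A) \<in> sets (borel_of (X (Suc s)))"
          using compl.IH w unfolding D_def secC[OF w] by auto
      qed
      have hm: "h A \<in> borel_measurable M0" using compl.IH unfolding D_def by auto
      have "(\<lambda>\<omega>. 1 - h A \<omega>) \<in> borel_measurable M0" using hm by measurable
      moreover have "h (\<Omega> - A) \<omega> = 1 - h A \<omega>" if "\<omega> \<in> space M0" for \<omega>
      proof -
        have w: "\<omega> \<in> \<Omega>0" using that M0 by auto
        have sb: "sec \<omega> A \<in> sets (p \<omega>)" using compl.IH w pw'(2)[OF w] unfolding D_def by auto
        have "h (\<Omega> - A) \<omega> = emeasure (p \<omega>) (space (p \<omega>) - sec \<omega> A)"
          unfolding h_def secC[OF w] pw'(3)[OF w] ..
        also have "\<dots> = emeasure (p \<omega>) (space (p \<omega>)) - emeasure (p \<omega>) (sec \<omega> A)"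
          by (rule emeasure_compl[OF sb]) (simp add: pemeq[OF pw'(1)[OF w]])
        also have "\<dots> = 1 - h A \<omega>" unfolding h_def using prob_space.emeasure_space_1[OF pw'(1)[OF w]] by simp
        finally show ?thesis .
      qed
      ultimately show "h (\<Omega> - A) \<in> borel_measurable M0"
        by (rule measurable_cong[THEN iffD2, rotated])
    qed
  next
    case (union A)
    have secU: "sec \<omega> (\<Union> (range A)) = (\<Union>i. sec \<omega> (A i))" for \<omega>
      unfolding sec_def by auto
    have dj: "disjoint_family (\<lambda>i. sec \<omega> (A i))" for \<omega>
      using union.hyps(1) unfolding disjoint_family_on_def sec_def by auto
    show ?case
      unfolding D_def
    proof
      show "\<forall>\<omega>\<in>\<Omega>0. sec \<omega> (\<Union> (range A)) \<in> sets (borel_of (X (Suc s)))"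
        using union.IH unfolding D_def secU by auto
      have "(\<lambda>\<omega>. \<Sum>i. h (A i) \<omega>) \<in> borel_measurable M0"
        using union.IH unfolding D_def by (intro borel_measurable_suminf_order) auto
      moreover have "h (\<Union> (range A)) \<omega> = (\<Sum>i. h (A i) \<omega>)" if "\<omega> \<in> space M0" for \<omega>
      proof -
        have w: "\<omega> \<in> \<Omega>0" using that M0 by auto
        have "range (\<lambda>i. sec \<omega> (A i)) \<subseteq> sets (p \<omega>)" using union.IH w pw'(2)[OF w] unfolding D_def by auto
        then show ?thesis unfolding h_def secU using suminf_emeasure[OF _ dj] by simp
      qed
      ultimately show "h (\<Union> (range A)) \<in> borel_measurable M0"
        by (rule measurable_cong[THEN iffD2, rotated])
    qed
  qed
  have DB: "D A" if "A \<in> sets (borel_of (Om X (Suc s)))" for A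
    using DA borel_Om_Suc_sub[OF sc] that unfolding \<Omega>_def by auto
  define \<mu> where "\<mu> A = (\<integral>\<^sup>+ \<omega>. h A \<omega> \<partial>M0)" for A
  have kc: "kcomp X (Suc s) P p = measure_of \<Omega> (sets (borel_of (Om X (Suc s)))) \<mu>"
    unfolding kcomp_def \<mu>_def h_def sec_def \<Omega>_def M0_def T_def by simp
  have sa: "sigma_algebra \<Omega> (sets (borel_of (Om X (Suc s))))"
    using sets.sigma_algebra_axioms[of "borel_of (Om X (Suc s))"] unfolding space_borel_of \<Omega>_def .
  have pos: "positive (sets (borel_of (Om X (Suc s)))) \<mu>"
    unfolding positive_def \<mu>_def h_def sec_def by auto
  have ca: "countably_additive (sets (borel_of (Om X (Suc s)))) \<mu>"
    unfolding countably_additive_def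
  proof (intro allI impI)
    fix A :: "nat \<Rightarrow> (nat \<Rightarrow> 'a) set"
    assume A: "range A \<subseteq> sets (borel_of (Om X (Suc s)))" "disjoint_family A"
      "\<Union> (range A) \<in> sets (borel_of (Om X (Suc s)))"
    have "(\<Sum>i. \<mu> (A i)) = (\<integral>\<^sup>+ \<omega>. (\<Sum>i. h (A i) \<omega>) \<partial>M0)"
      unfolding \<mu>_def by (rule nn_integral_suminf[symmetric]) (use A(1) DB in \<open>auto simp: D_def\<close>)
    also have "\<dots> = \<mu> (\<Union> (range A))"
      unfolding \<mu>_def
    proof (rule nn_integral_cong)
      fix \<omega> assume "\<omega> \<in> space M0"
      then have w: "\<omega> \<in> \<Omega>0" using M0 by auto
      have "range (\<lambda>i. sec \<omega> (A i)) \<subseteq> sets (p \<omega>)" using A(1) DB w pw'(2)[OF w] unfolding D_def by auto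
      moreover have "disjoint_family (\<lambda>i. sec \<omega> (A i))"
        using A(2) unfolding disjoint_family_on_def sec_def by auto
      moreover have "sec \<omega> (\<Union> (range A)) = (\<Union>i. sec \<omega> (A i))" unfolding sec_def by auto
      ultimately show "(\<Sum>i. h (A i) \<omega>) = h (\<Union> (range A)) \<omega>"
        unfolding h_def using suminf_emeasure by metis
    qed
    finally show "(\<Sum>i. \<mu> (A i)) = \<mu> (\<Union> (range A))" .
  qed
  have sets_k: "sets (kcomp X (Suc s) P p) = sets (borel_of (Om X (Suc s)))"
    unfolding kc by (rule sigma_algebra.sets_measure_of_eq[OF sa])
  have space_k: "space (kcomp X (Suc s) P p) = \<Omega>"
    unfolding kc by (rule space_measure_of_conv)
  have "emeasure (kcomp X (Suc s) P p) \<Omega> = \<mu> \<Omega>"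
    unfolding kc by (rule emeasure_measure_of_sigma[OF sa pos ca]) (use open_borel_of[OF openin_topspace] in \<open>simp add: \<Omega>_def\<close>)
  also have "\<dots> = (\<integral>\<^sup>+ \<omega>. 1 \<partial>M0)"
    unfolding \<mu>_def
  proof (rule nn_integral_cong)
    fix \<omega> assume "\<omega> \<in> space M0"
    then have w: "\<omega> \<in> \<Omega>0" using M0 by auto
    have "sec \<omega> \<Omega> = space (p \<omega>)" unfolding sec_def pw'(3)[OF w] using upd[OF w] by auto
    then show "h \<Omega> \<omega> = 1" unfolding h_def using prob_space.emeasure_space_1[OF pw'(1)[OF w]] by simp
  qed
  also have "\<dots> = 1" using prob_space.emeasure_space_1[OF M0(1)] by simp
  finally have "prob_space (kcomp X (Suc s) P p)"
    by (intro prob_spaceI) (simp add: space_k)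
  then show ?thesis unfolding probs_def using sets_k space_k \<Omega>_def by auto
qed

lemma Qseq_probs:
  assumes Pol: "\<forall>t\<in>{1..T}. Polish_space (X t)"
    and SKq: "\<forall>s<T. SK X (Suc s) (q (Suc s))"
  shows "s \<le> T \<Longrightarrow> Qseq X q s \<in> probs (Om X s)"
proof (induction s)
  case 0
  have sp: "(\<lambda>_. undefined) \<in> space (borel_of (Om X 0))"
    unfolding space_borel_of topspace_Om by simp
  show ?case
    unfolding probs_def using prob_space_return[OF sp] sp
    by (simp add: space_borel_of)
next
  case (Suc s)
  have sc1: "second_countable (Om X s)"
    by (rule Om_sc) (use Pol Suc.prems in \<open>auto intro: Polish_sc\<close>)
  have sc2: "second_countable (X (Suc s))"
    using Pol Suc.prems by (auto intro: Polish_sc)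
  show ?case
    unfolding Qseq.simps
    by (rule kcomp_probs[OF Suc.IH _ sc1 sc2]) (use Suc.prems SKq in auto)
qed

lemma QT_probs:
  assumes Pol: "\<forall>t\<in>{1..T}. Polish_space (X t)" and P: "P \<in> QT X Qr T"
  shows "P \<in> probs (Om X T)"
proof -
  obtain q where q: "P = Qseq X q T" "\<forall>s<T. SK X (Suc s) (q (Suc s))"
    using P unfolding QT_def by auto
  show ?thesis unfolding q(1) by (rule Qseq_probs[OF Pol q(2)]) auto
qed

lemma utility_deriv:
  assumes "utility f" "0 < x"
  shows "(f has_real_derivative deriv f x) (at x)"
proof -
  obtain f' f'' where "\<forall>x>0. (f has_real_derivative f' x) (at x) \<and> (f' has_real_derivative f'' x) (at x)"
    using assms(1) unfolding utility_def C2_pos_def by blast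
  then have "(f has_real_derivative f' x) (at x)" using assms(2) by auto
  then show ?thesis using DERIV_imp_deriv by metis
qed

lemma utility_isCont: "utility f \<Longrightarrow> 0 < x \<Longrightarrow> isCont f x"
  using utility_deriv DERIV_isCont by blast

lemma utility_less: "utility f \<Longrightarrow> 0 < x \<Longrightarrow> x < y \<Longrightarrow> f x < f y"
  unfolding utility_def by (auto intro: strict_mono_onD)

lemma utility_le: "utility f \<Longrightarrow> 0 < x \<Longrightarrow> x \<le> y \<Longrightarrow> f x \<le> f y"
  using utility_less[of f x y] by (cases "x = y") auto

lemma Uext_pos: "0 < x \<Longrightarrow> Uext f x = ereal (f x)"
  unfolding Uext_def by simp

lemma Uext_neg: "x < 0 \<Longrightarrow> Uext f x = -\<infinity>"
  unfolding Uext_def by simp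

lemma Uext_0:
  assumes u: "utility f"
  shows "Uext f 0 = (INF c\<in>{0<..}. ereal (f c))"
proof -
  define I where "I = (INF c\<in>{0<..}. ereal (f c))"
  have "((\<lambda>y. ereal (f y)) \<longlongrightarrow> I) (at_right 0)"
    unfolding order_tendsto_iff
  proof (intro conjI allI impI)
    fix l assume l: "l < I"
    have "\<forall>\<^sub>F x in at_right (0::real). 0 < x" by (simp add: eventually_at_right_less)
    then show "\<forall>\<^sub>F x in at_right 0. l < ereal (f x)"
    proof eventually_elim
      fix x :: real assume "0 < x"
      then have "I \<le> ereal (f x)" unfolding I_def by (intro INF_lower) auto
      then show "l < ereal (f x)" using l by auto
    qed
  next
    fix u assume "I < u"
    then obtain c where c: "0 < c" "ereal (f c) < u" unfolding I_def INF_less_iff by auto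
    have "\<forall>\<^sub>F x in at_right (0::real). x \<in> {0<..<c}" by (rule eventually_at_right_real[OF c(1)])
    then show "\<forall>\<^sub>F x in at_right 0. ereal (f x) < u"
    proof eventually_elim
      fix x assume "x \<in> {0::real<..<c}"
      then have "f x < f c" using utility_less[OF u] by auto
      then show "ereal (f x) < u" using c(2) by (metis ereal_less_eq(3) le_less_trans less_imp_le)
    qed
  qed
  then have "Lim (at_right 0) (\<lambda>y. ereal (f y)) = I"
    by (intro tendsto_Lim) auto
  then show ?thesis unfolding Uext_def I_def by simp
qed

lemma Uext_0_INF:
  assumes u: "utility f"
  shows "Uext f 0 = (INF c\<in>{0<..}. Uext f c)"
  unfolding Uext_0[OF u] by (rule INF_cong) (auto simp: Uext_pos)

lemma Uext_mono:
  assumes u: "utility f" and "0 \<le> x" "x < y"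
  shows "Uext f x < Uext f y"
proof (cases "x = 0")
  case True
  have "Uext f 0 \<le> ereal (f (y/2))" unfolding Uext_0[OF u] using assms by (intro INF_lower) auto
  also have "f (y/2) < f y" using assms by (intro utility_less[OF u]) auto
  then have "ereal (f (y/2)) < ereal (f y)" by simp
  finally show ?thesis using True assms by (simp add: Uext_pos)
next
  case False
  then show ?thesis using assms utility_less[OF u, of x y] by (simp add: Uext_pos)
qed

lemma Uext_le:
  assumes u: "utility f" and "0 \<le> x" "x \<le> y"
  shows "Uext f x \<le> Uext f y"
  using Uext_mono[OF u, of x y] assms by (cases "x = y") auto

lemma Uext_isCont:
  assumes u: "utility f" and c: "0 < c"
  shows "isCont (\<lambda>x. real_of_ereal (Uext f x)) c"
proof -
  have "\<forall>\<^sub>F x in nhds c. x \<in> {0<..}" by (rule eventually_nhds_in_open) (use c in auto)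
  then have "\<forall>\<^sub>F x in nhds c. real_of_ereal (Uext f x) = f x"
    by eventually_elim (auto simp: Uext_pos)
  then have "isCont (\<lambda>x. real_of_ereal (Uext f x)) c = isCont f c" by (rule isCont_cong)
  then show ?thesis using utility_isCont[OF u c] by simp
qed

lemma Uext_fin: "0 < c \<Longrightarrow> \<bar>Uext f c\<bar> \<noteq> \<infinity>"
  by (simp add: Uext_pos)

lemma pfin: "prob_space M \<Longrightarrow> finite_measure M"
  by (simp add: prob_space_def)

lemma CE_const:
  assumes M: "prob_space M" and u: "utility u"
  shows "CE M (\<lambda>\<omega> c. Uext u c)"
proof -
  interpret prob_space M by (rule M)
  show ?thesis
    by (unfold_locales) (auto simp: Uext_fin Uext_mono[OF u] Uext_isCont[OF u] Uext_0_INF[OF u])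
qed

lemma CE_rand:
  assumes M: "prob_space M" and u: "\<And>\<omega>. \<omega> \<in> space M \<Longrightarrow> utility (U \<omega>)"
    and m: "\<And>c. 0 < c \<Longrightarrow> (\<lambda>\<omega>. U \<omega> c) \<in> borel_measurable M"
    and i: "\<And>c. 0 < c \<Longrightarrow> integrable M (\<lambda>\<omega>. U \<omega> c)"
  shows "CE M (\<lambda>\<omega> c. Uext (U \<omega>) c)"
proof -
  interpret prob_space M by (rule M)
  show ?thesis
  proof (unfold_locales)
    show "\<And>c. 0 < c \<Longrightarrow> (\<lambda>\<omega>. Uext (U \<omega>) c) \<in> borel_measurable M"
      using m by (simp add: Uext_pos)
    show "\<And>c. 0 < c \<Longrightarrow> integrable M (\<lambda>\<omega>. real_of_ereal (Uext (U \<omega>) c))"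
      using i by (simp add: Uext_pos)
  qed (auto simp: Uext_fin Uext_mono[OF u] Uext_isCont[OF u] Uext_0_INF[OF u])
qed

lemma ereal_neg_le_diff: "0 \<le> (x::ereal) \<Longrightarrow> - y \<le> x - y"
  by (cases x; cases y) auto

lemma EE_ge: "- enn2ereal (\<integral>\<^sup>+\<omega>. e2ennreal (- f \<omega>) \<partial>M) \<le> EE M f"
  unfolding EE_def Let_def
  by (auto intro!: ereal_neg_le_diff)

lemma convex_on_cong':
  assumes "convex_on S f" "\<And>x. x \<in> S \<Longrightarrow> f x = g x"
  shows "convex_on S g"
  using assms unfolding convex_on_def convex_def by (metis (no_types, lifting))

locale setting =
  fixes X :: "nat \<Rightarrow> 'a topology"
    and T :: nat
    and Qr :: "nat \<Rightarrow> (nat \<Rightarrow> 'a) \<Rightarrow> 'a measure set"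
    and G :: "(nat \<Rightarrow> 'a) \<Rightarrow> ennreal"
  assumes T: "1 \<le> T"
    and Polish: "\<forall>t\<in>{1..T}. Polish_space (X t)"
    and QT_ne: "QT X Qr T \<noteq> {}"
    and G_meas: "G \<in> borel_measurable (univ_space (Om X T))"
    and G_fin: "qs (Om X T) (QT X Qr T) (\<lambda>\<omega>. G \<omega> < \<infinity>)"
begin

lemma Pprobs: "P \<in> QT X Qr T \<Longrightarrow> P \<in> probs (Om X T)"
  by (rule QT_probs[OF Polish])

lemma Pprob: "P \<in> QT X Qr T \<Longrightarrow> prob_space (completion P)"
  using probsD(4)[OF Pprobs] .

lemma Pspace: "P \<in> QT X Qr T \<Longrightarrow> space (completion P) = topspace (Om X T)"
  using probsD(5)[OF Pprobs] .

lemma G_measP: "P \<in> QT X Qr T \<Longrightarrow> G \<in> borel_measurable (completion P)"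
  by (rule univ_meas[OF Pprobs G_meas])

lemma g_measP: "P \<in> QT X Qr T \<Longrightarrow> (\<lambda>\<omega>. enn2real (G \<omega>)) \<in> borel_measurable (completion P)"
  using G_measP by measurable

lemma G_finP: "P \<in> QT X Qr T \<Longrightarrow> AE \<omega> in completion P. G \<omega> < \<infinity>"
  by (rule qs_AE[OF G_fin _ Pprobs])

lemma meas_univP: "P \<in> QT X Qr T \<Longrightarrow> f \<in> borel_measurable (univ_space (Om X T)) \<Longrightarrow> f \<in> borel_measurable (completion P)"
  by (rule univ_meas[OF Pprobs])

lemma Epos_le_SUP: "P \<in> QT X Qr T \<Longrightarrow> Epos P f \<le> (SUP P\<in>QT X Qr T. Epos P f)"
  by (rule SUP_upper)

lemma part2:
  "(\<forall>u. utility u \<and> {x. Uext u x > -\<infinity>} = {0<..}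
       \<and> (\<forall>P\<in>QT X Qr T. Epos P (\<lambda>\<omega>. e2ennreal (Uext u (enn2real (G \<omega>)))) < \<infinity>)
       \<and> (SUP P\<in>QT X Qr T. Epos P (\<lambda>\<omega>. e2ennreal (- Uext u (enn2real (G \<omega>))))) < \<infinity>
     \<longrightarrow>
       (\<forall>P\<in>QT X Qr T. \<exists>!c::real. 0 \<le> c \<and> Uext u c = Eexp P (\<lambda>\<omega>. Uext u (enn2real (G \<omega>))))
     \<and> (\<exists>!c::real. 0 \<le> c \<and> Uext u c = (INF P\<in>QT X Qr T. Eexp P (\<lambda>\<omega>. Uext u (enn2real (G \<omega>)))))
     \<and> (let eP = (\<lambda>P. THE c::real. 0 \<le> c \<and> Uext u c = Eexp P (\<lambda>\<omega>. Uext u (enn2real (G \<omega>))));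
           eG = (THE c::real. 0 \<le> c \<and>
                   Uext u c = (INF P\<in>QT X Qr T. Eexp P (\<lambda>\<omega>. Uext u (enn2real (G \<omega>)))));
           rho = (\<lambda>P. enn2ereal (Epos P G) - ereal (eP P));
           rhoG = (SUP P\<in>QT X Qr T. rho P)
       in (\<forall>P\<in>QT X Qr T. ennreal (eP P) \<le> Epos P G)
          \<and> eG = (INF P\<in>QT X Qr T. eP P)
          \<and> ennreal eG \<le> (INF P\<in>QT X Qr T. Epos P G)
          \<and> 0 \<le> rhoG
          \<and> rhoG \<le> (SUP P\<in>QT X Qr T. enn2ereal (Epos P G)) - ereal eG))"
proof (intro allI impI)
  fix u :: "real \<Rightarrow> real"
  assume H: "utility u \<and> {x. Uext u x > -\<infinity>} = {0<..}
       \<and> (\<forall>P\<in>QT X Qr T. Epos P (\<lambda>\<omega>. e2ennreal (Uext u (enn2real (G \<omega>)))) < \<infinity>)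
       \<and> (SUP P\<in>QT X Qr T. Epos P (\<lambda>\<omega>. e2ennreal (- Uext u (enn2real (G \<omega>))))) < \<infinity>"
  define Q where "Q = QT X Qr T"
  define g where "g \<omega> = enn2real (G \<omega>)" for \<omega>
  have u: "utility u" using H by auto
  have dom: "{x. Uext u x > -\<infinity>} = {0<..}" using H by auto
  have Hp: "\<And>P. P \<in> Q \<Longrightarrow> Epos P (\<lambda>\<omega>. e2ennreal (Uext u (g \<omega>))) < \<infinity>" using H unfolding Q_def g_def by auto
  define C where "C = (SUP P\<in>Q. Epos P (\<lambda>\<omega>. e2ennreal (- Uext u (g \<omega>))))"
  have Cfin: "C < \<infinity>" using H unfolding C_def Q_def g_def by auto
  have Hn: "\<And>P. P \<in> Q \<Longrightarrow> Epos P (\<lambda>\<omega>. e2ennreal (- Uext u (g \<omega>))) < \<infinity>"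
    using Cfin unfolding C_def by (meson SUP_upper le_less_trans)
  have U0: "Uext u 0 = -\<infinity>"
  proof -
    have "(0::real) \<notin> {x. Uext u x > -\<infinity>}" using dom by auto
    then show ?thesis by auto
  qed
  have ce: "CE (completion P) (\<lambda>\<omega> c. Uext u c)" if "P \<in> Q" for P
    by (rule CE_const[OF Pprob u]) (use that Q_def in auto)
  have Fc: "CE.F (completion P) (\<lambda>\<omega> c. Uext u c) c = Uext u c" if "P \<in> Q" for P c
    using CE.F_def[OF ce[OF that]] EE_const[OF Pprob] that Q_def by auto
  have gm: "g \<in> borel_measurable (completion P)" if "P \<in> Q" for P
    using g_measP that unfolding Q_def g_def by auto
  have g0: "0 \<le> g \<omega>" for \<omega> unfolding g_def by auto
  define mP where "mP P = Eexp P (\<lambda>\<omega>. Uext u (g \<omega>))" for P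
  have uniqP: "\<exists>!c. 0 \<le> c \<and> Uext u c = mP P" if P: "P \<in> Q" for P
  proof -
    have "\<exists>!c. 0 \<le> c \<and> CE.F (completion P) (\<lambda>\<omega> c. Uext u c) c = EE (completion P) (\<lambda>\<omega>. Uext u (g \<omega>))"
      by (rule CE.CE_unique[OF ce[OF P] gm[OF P] g0])
         (use Hp[OF P] Hn[OF P] in \<open>auto simp: Epos_def\<close>)
    then show ?thesis unfolding Fc[OF P] mP_def Eexp_EE .
  qed
  have Zm: "(\<lambda>\<omega>. Uext u (g \<omega>)) \<in> borel_measurable (completion P)" if P: "P \<in> Q" for P
    using CE.Vg_meas[OF ce[OF P] gm[OF P] g0] .
  define Zr where "Zr \<omega> = real_of_ereal (Uext u (g \<omega>))" for \<omega>
  have mP_eq: "mP P = ereal (\<integral>\<omega>. Zr \<omega> \<partial>completion P)" if P: "P \<in> Q" for P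
    using EE_integrable[OF Zm[OF P]] Hp[OF P] Hn[OF P] unfolding mP_def Eexp_EE Zr_def by (auto simp: Epos_def)
  have Zae: "AE \<omega> in completion P. Uext u (g \<omega>) = ereal (Zr \<omega>)" if P: "P \<in> Q" for P
    using EE_integrable[OF Zm[OF P]] Hp[OF P] Hn[OF P] unfolding Zr_def by (auto simp: Epos_def)
  have Zi: "integrable (completion P) Zr" if P: "P \<in> Q" for P
    using EE_integrable[OF Zm[OF P]] Hp[OF P] Hn[OF P] unfolding Zr_def by (auto simp: Epos_def)
  define eP where "eP P = (THE c. 0 \<le> c \<and> Uext u c = mP P)" for P
  have eP: "0 \<le> eP P" "Uext u (eP P) = mP P" if P: "P \<in> Q" for P
    using theI'[OF uniqP[OF P]] unfolding eP_def by auto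
  have eP_pos: "0 < eP P" if P: "P \<in> Q" for P
  proof (rule ccontr)
    assume "\<not> 0 < eP P"
    then have "eP P = 0" using eP(1)[OF P] by auto
    then show False using eP(2)[OF P] mP_eq[OF P] U0 by auto
  qed
  define m where "m = (INF P\<in>Q. mP P)"
  obtain P0 where P0: "P0 \<in> Q" using QT_ne unfolding Q_def by auto
  have m_le: "m \<le> mP P" if "P \<in> Q" for P unfolding m_def using that by (rule INF_lower)
  have m_lb: "- enn2ereal C \<le> m"
    unfolding m_def
  proof (rule INF_greatest)
    fix P assume P: "P \<in> Q"
    have "Epos P (\<lambda>\<omega>. e2ennreal (- Uext u (g \<omega>))) \<le> C" unfolding C_def using P by (rule SUP_upper)
    then have "- enn2ereal C \<le> - enn2ereal (Epos P (\<lambda>\<omega>. e2ennreal (- Uext u (g \<omega>))))"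
      by (simp add: less_eq_ennreal.rep_eq)
    also have "\<dots> \<le> mP P" unfolding mP_def Eexp_EE Epos_def by (rule EE_ge)
    finally show "- enn2ereal C \<le> mP P" .
  qed
  have m_fin: "\<bar>m\<bar> \<noteq> \<infinity>"
  proof -
    have "m \<noteq> -\<infinity>" using m_lb Cfin by (auto simp: enn2ereal_fin)
    moreover have "m \<noteq> \<infinity>" using m_le[OF P0] mP_eq[OF P0] by auto
    ultimately show ?thesis by auto
  qed
  then obtain mr where mr: "m = ereal mr" by (cases m) auto
  have ex_m: "\<exists>c. 0 \<le> c \<and> Uext u c = m"
  proof -
    have "(INF c\<in>{0<..}. ereal (u c)) = -\<infinity>" using Uext_0[OF u] U0 by simp
    then have "(INF c\<in>{0<..}. ereal (u c)) < m" using mr by simp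
    then obtain a where a: "0 < a" "ereal (u a) < m" by (auto simp: INF_less_iff)
    define b where "b = eP P0 + 1"
    have b: "0 < b" using eP(1)[OF P0] unfolding b_def by auto
    have "m \<le> Uext u (eP P0)" using m_le[OF P0] eP(2)[OF P0] by simp
    also have "\<dots> < Uext u b" unfolding b_def by (rule Uext_mono[OF u]) (use eP(1)[OF P0] in auto)
    finally have mb: "m < ereal (u b)" using b by (simp add: Uext_pos)
    have ab: "a < b"
    proof (rule ccontr)
      assume "\<not> a < b"
      then have "u b \<le> u a" using b by (intro utility_le[OF u]) auto
      then show False using a(2) mb mr by simp
    qed
    have "u a \<le> mr" "mr \<le> u b" using a mb mr by auto
    moreover have "continuous_on {a..b} u"
      by (rule continuous_at_imp_continuous_on) (use a in \<open>auto intro!: utility_isCont[OF u]\<close>)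
    ultimately obtain c where c: "a \<le> c" "c \<le> b" "u c = mr" using IVT'[of u a mr b] ab by auto
    then show ?thesis using a mr by (intro exI[of _ c]) (auto simp: Uext_pos)
  qed
  have uniq_m: "\<exists>!c. 0 \<le> c \<and> Uext u c = m"
  proof (rule ex_ex1I)
    show "\<exists>c. 0 \<le> c \<and> Uext u c = m" by (rule ex_m)
    fix c d assume c: "0 \<le> c \<and> Uext u c = m" and d: "0 \<le> d \<and> Uext u d = m"
    show "c = d"
    proof (rule ccontr)
      assume "c \<noteq> d"
      then have "c < d \<or> d < c" by auto
      then show False using Uext_mono[OF u, of c d] Uext_mono[OF u, of d c] c d by auto
    qed
  qed
  define eG where "eG = (THE c. 0 \<le> c \<and> Uext u c = m)"
  have eG: "0 \<le> eG" "Uext u eG = m" using theI'[OF uniq_m] unfolding eG_def by auto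
  have le_of_Uext: "x \<le> y" if "0 \<le> x" "0 \<le> y" "Uext u x \<le> Uext u y" for x y
  proof (rule ccontr)
    assume "\<not> x \<le> y"
    then have "Uext u y < Uext u x" using that by (intro Uext_mono[OF u]) auto
    then show False using that by auto
  qed
  have bdd: "bdd_below (eP ` Q)" using eP(1) by (auto intro!: bdd_belowI[of _ 0])
  have eG_eq: "eG = (INF P\<in>Q. eP P)"
  proof (rule antisym)
    show "eG \<le> (INF P\<in>Q. eP P)"
    proof (rule cINF_greatest)
      show "Q \<noteq> {}" using P0 by auto
      fix P assume P: "P \<in> Q"
      show "eG \<le> eP P" by (rule le_of_Uext) (use eG eP[OF P] m_le[OF P] in auto)
    qed
    show "(INF P\<in>Q. eP P) \<le> eG"
    proof (rule ccontr)
      assume "\<not> (INF P\<in>Q. eP P) \<le> eG"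
      then have lt: "eG < (INF P\<in>Q. eP P)" by auto
      have "Uext u eG < Uext u (INF P\<in>Q. eP P)" by (rule Uext_mono[OF u eG(1) lt])
      also have "\<dots> \<le> m"
        unfolding m_def
      proof (rule INF_greatest)
        fix P assume P: "P \<in> Q"
        have "(INF P\<in>Q. eP P) \<le> eP P" by (rule cINF_lower[OF bdd P])
        then have "Uext u (INF P\<in>Q. eP P) \<le> Uext u (eP P)"
          using eG(1) lt by (intro Uext_le[OF u]) auto
        then show "Uext u (INF P\<in>Q. eP P) \<le> mP P" using eP(2)[OF P] by simp
      qed
      finally show False using eG(2) by simp
    qed
  qed
  have jensen: "ennreal (eP P) \<le> Epos P G" if P: "P \<in> Q" for P
  proof (cases "Epos P G = \<infinity>")
    case True then show ?thesis by simp
  next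
    case False
    have Pq: "P \<in> QT X Qr T" using P Q_def by simp
    interpret prob_space "completion P" by (rule Pprob[OF Pq])
    have Gfin: "AE \<omega> in completion P. G \<omega> < \<infinity>" by (rule G_finP[OF Pq])
    have nng: "(\<integral>\<^sup>+\<omega>. ennreal (g \<omega>) \<partial>completion P) = Epos P G"
      unfolding Epos_def g_def
      by (rule nn_integral_cong_AE) (use Gfin in \<open>auto simp: ennreal_enn2real less_top\<close>)
    have gi: "integrable (completion P) g"
      unfolding integrable_iff_bounded using gm[OF P] nng False g0 by (auto simp: less_top)
    have gpos: "AE \<omega> in completion P. 0 < g \<omega>"
      using Zae[OF P]
    proof eventually_elim
      fix \<omega> assume "Uext u (g \<omega>) = ereal (Zr \<omega>)"
      then show "0 < g \<omega>" using U0 g0[of \<omega>] by (cases "g \<omega> = 0") auto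
    qed
    have cq: "convex_on {0<..} (\<lambda>x. - real_of_ereal (Uext u x))"
    proof (rule convex_on_cong')
      show "convex_on {0<..} (\<lambda>x. - u x)" using u unfolding utility_def convex_on_iff_concave by simp
    qed (auto simp: Uext_pos)
    have "(\<lambda>x. - real_of_ereal (Uext u x)) (expectation g) \<le> expectation (\<lambda>\<omega>. (\<lambda>x. - real_of_ereal (Uext u x)) (g \<omega>))"
    proof (rule jensens_inequality[where I="{0<..}" and a=0])
      show "integrable (completion P) g" by (rule gi)
      show "AE \<omega> in completion P. g \<omega> \<in> {0<..}" using gpos by auto
      show "integrable (completion P) (\<lambda>\<omega>. - real_of_ereal (Uext u (g \<omega>)))"
        using Zi[OF P] unfolding Zr_def by auto
    qed (use cq in auto)
    then have jj: "expectation Zr \<le> real_of_ereal (Uext u (expectation g))"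
      unfolding Zr_def by simp
    have ep: "0 < expectation g" by (rule expectation_greater[OF gi gpos])
    have "Uext u (eP P) = ereal (expectation Zr)" using eP(2)[OF P] mP_eq[OF P] by simp
    also have "\<dots> \<le> Uext u (expectation g)" using jj ep by (simp add: Uext_pos)
    finally have "eP P \<le> expectation g" by (rule le_of_Uext[OF eP(1)[OF P] less_imp_le[OF ep], rotated])
    then have "ennreal (eP P) \<le> ennreal (expectation g)" by (rule ennreal_leI)
    also have "\<dots> = Epos P G"
      using nn_integral_eq_integral[OF gi] g0 nng by auto
    finally show ?thesis .
  qed
  show "(\<forall>P\<in>QT X Qr T. \<exists>!c::real. 0 \<le> c \<and> Uext u c = Eexp P (\<lambda>\<omega>. Uext u (enn2real (G \<omega>))))
     \<and> (\<exists>!c::real. 0 \<le> c \<and> Uext u c = (INF P\<in>QT X Qr T. Eexp P (\<lambda>\<omega>. Uext u (enn2real (G \<omega>)))))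
     \<and> (let eP = (\<lambda>P. THE c::real. 0 \<le> c \<and> Uext u c = Eexp P (\<lambda>\<omega>. Uext u (enn2real (G \<omega>))));
           eG = (THE c::real. 0 \<le> c \<and>
                   Uext u c = (INF P\<in>QT X Qr T. Eexp P (\<lambda>\<omega>. Uext u (enn2real (G \<omega>)))));
           rho = (\<lambda>P. enn2ereal (Epos P G) - ereal (eP P));
           rhoG = (SUP P\<in>QT X Qr T. rho P)
       in (\<forall>P\<in>QT X Qr T. ennreal (eP P) \<le> Epos P G)
          \<and> eG = (INF P\<in>QT X Qr T. eP P)
          \<and> ennreal eG \<le> (INF P\<in>QT X Qr T. Epos P G)
          \<and> 0 \<le> rhoG
          \<and> rhoG \<le> (SUP P\<in>QT X Qr T. enn2ereal (Epos P G)) - ereal eG)"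
  proof -
    have r1: "ennreal eG \<le> (INF P\<in>Q. Epos P G)"
    proof (rule INF_greatest)
      fix P assume P: "P \<in> Q"
      have "eG \<le> eP P" using eG_eq cINF_lower[OF bdd P] by simp
      then have "ennreal eG \<le> ennreal (eP P)" by (rule ennreal_leI)
      also have "\<dots> \<le> Epos P G" by (rule jensen[OF P])
      finally show "ennreal eG \<le> Epos P G" .
    qed
    have rho0: "0 \<le> enn2ereal (Epos P G) - ereal (eP P)" if P: "P \<in> Q" for P
    proof -
      have "enn2ereal (ennreal (eP P)) \<le> enn2ereal (Epos P G)"
        using jensen[OF P] by (simp add: less_eq_ennreal.rep_eq)
      then have "ereal (eP P) \<le> enn2ereal (Epos P G)" using eP(1)[OF P] by (simp add: enn2ereal_ennreal)
      then show ?thesis by (cases "enn2ereal (Epos P G)") auto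
    qed
    have r2: "0 \<le> (SUP P\<in>Q. enn2ereal (Epos P G) - ereal (eP P))"
      using rho0[OF P0] by (rule order_trans) (rule SUP_upper[OF P0])
    have r3: "(SUP P\<in>Q. enn2ereal (Epos P G) - ereal (eP P)) \<le> (SUP P\<in>Q. enn2ereal (Epos P G)) - ereal eG"
    proof (rule SUP_least)
      fix P assume P: "P \<in> Q"
      have "eG \<le> eP P" using eG_eq cINF_lower[OF bdd P] by simp
      then show "enn2ereal (Epos P G) - ereal (eP P) \<le> (SUP P\<in>Q. enn2ereal (Epos P G)) - ereal eG"
        by (intro ereal_minus_mono SUP_upper P) auto
    qed
    have eqs: "(\<lambda>P. THE c::real. 0 \<le> c \<and> Uext u c = Eexp P (\<lambda>\<omega>. Uext u (enn2real (G \<omega>)))) = eP"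
      unfolding eP_def mP_def g_def by simp
    have eqs2: "(THE c::real. 0 \<le> c \<and> Uext u c = (INF P\<in>QT X Qr T. Eexp P (\<lambda>\<omega>. Uext u (enn2real (G \<omega>))))) = eG"
      unfolding eG_def m_def mP_def g_def Q_def by simp
    show ?thesis
      unfolding Let_def eqs eqs2
      using uniqP uniq_m jensen eG_eq r1 r2 r3
      unfolding Q_def mP_def m_def g_def by auto
  qed
qed

end

lemma utility_concave_bound:
  assumes u: "utility f" and c: "1 < c"
  shows "f c \<le> (2 * c - 1) * f 1 - (2 * c - 2) * f (1/2)"
proof -
  have cc: "concave_on {0<..} f" using u unfolding utility_def by auto
  define t where "t = 1 / (2 * c - 1)"
  have c1: "0 < 2 * c - 1" using c by auto
  have tt: "t * (2 * c - 1) = 1" unfolding t_def using c1 by simp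
  have t: "0 \<le> t" "t \<le> 1" using c c1 unfolding t_def by (auto simp: field_simps)
  have "(1 - t) * f (1/2) + t * f c \<le> f ((1 - t) *\<^sub>R (1/2) + t *\<^sub>R c)"
    by (rule concave_onD[OF cc t]) (use c in auto)
  also have "(1 - t) *\<^sub>R (1/2) + t *\<^sub>R c = (1::real)"
  proof -
    have "(1 - t) *\<^sub>R (1/2) + t *\<^sub>R c = 1/2 + (t * (2 * c - 1)) / 2" by (simp add: field_simps)
    then show ?thesis using tt by simp
  qed
  finally have h: "(1 - t) * f (1/2) + t * f c \<le> f 1" .
  have "t * f c \<le> f 1 - (1 - t) * f (1/2)" using h by simp
  then have "(2 * c - 1) * (t * f c) \<le> (2 * c - 1) * (f 1 - (1 - t) * f (1/2))"
    using c by (intro mult_left_mono) auto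
  moreover have "(2 * c - 1) * (t * f c) = f c"
  proof -
    have "(2 * c - 1) * (t * f c) = (t * (2 * c - 1)) * f c" by (metis mult.assoc mult.commute)
    then show ?thesis using tt by simp
  qed
  moreover have "(2 * c - 1) * (f 1 - (1 - t) * f (1/2)) = (2 * c - 1) * f 1 - (2 * c - 2) * f (1/2)"
  proof -
    have "(2 * c - 1) * (f 1 - (1 - t) * f (1/2)) - ((2 * c - 1) * f 1 - (2 * c - 2) * f (1/2))
        = f (1/2) * (t * (2 * c - 1) - 1)" by (simp add: algebra_simps)
    then show ?thesis using tt by simp
  qed
  ultimately show ?thesis by simp
qed

lemma utility_tangent:
  assumes u: "utility f" and c: "0 < c" "c < d"
  shows "deriv f d * (d - c) \<le> f d - f c"
proof -
  have cv: "convex_on {0<..} (\<lambda>x. - f x)" using u unfolding utility_def convex_on_iff_concave by simp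
  have d: "0 < d" using c by auto
  have "(f has_field_derivative deriv f d) (at d)" using utility_deriv[OF u d] .
  then have "((\<lambda>x. - f x) has_field_derivative - deriv f d) (at d)" by (rule DERIV_minus)
  then have D: "((\<lambda>x. - f x) has_field_derivative - deriv f d) (at d within {0<..})"
    by (rule has_field_derivative_at_within)
  have conn: "connected {0::real<..}" by (simp add: convex_connected)
  have i: "d \<in> interior {0::real<..}" using d by (simp add: interior_open)
  have cc: "c \<in> {0::real<..}" using c by simp
  have "- f c - - f d \<ge> - deriv f d * (c - d)"
    by (rule convex_on_imp_above_tangent[OF cv conn i cc D])
  then show ?thesis by (simp add: algebra_simps)
qed

lemma deriv_meas:
  assumes u: "\<And>\<omega>. \<omega> \<in> space M \<Longrightarrow> utility (U \<omega>)"
    and m: "\<And>c. 0 < c \<Longrightarrow> (\<lambda>\<omega>. U \<omega> c) \<in> borel_measurable M"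
    and d: "0 < d"
  shows "(\<lambda>\<omega>. deriv (U \<omega>) d) \<in> borel_measurable M"
proof (rule borel_measurable_LIMSEQ_real)
  define s where "s n = d + inverse (real (Suc n))" for n
  have s0: "0 < s n" for n unfolding s_def using d by (auto intro: add_pos_pos)
  show "(\<lambda>\<omega>. (U \<omega> (s n) - U \<omega> d) / (s n - d)) \<in> borel_measurable M" for n
    using m[OF s0[of n]] m[OF d] by measurable
  fix \<omega> assume w: "\<omega> \<in> space M"
  have D: "((\<lambda>y. (U \<omega> y - U \<omega> d) / (y - d)) \<longlongrightarrow> deriv (U \<omega>) d) (at d)"
    using utility_deriv[OF u[OF w] d] unfolding has_field_derivative_iff .
  have "filterlim s (at d) sequentially"
    unfolding filterlim_at
  proof
    show "\<forall>\<^sub>F n in sequentially. s n \<in> UNIV \<and> s n \<noteq> d" unfolding s_def by auto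
    have "(\<lambda>n. d + inverse (real (Suc n))) \<longlonglongrightarrow> d + 0"
      by (intro tendsto_add tendsto_const LIMSEQ_inverse_real_of_nat)
    then show "s \<longlonglongrightarrow> d" unfolding s_def by simp
  qed
  from filterlim_compose[OF D this]
  show "(\<lambda>n. (U \<omega> (s n) - U \<omega> d) / (s n - d)) \<longlonglongrightarrow> deriv (U \<omega>) d" .
qed

context setting begin

lemma part1_setup:
  assumes RU: "random_utility X T U"
    and H2: "\<forall>y>0. (SUP P\<in>QT X Qr T. Epos P (\<lambda>\<omega>. ennreal (- U \<omega> y))) < \<infinity>"
    and H3: "\<forall>P\<in>QT X Qr T. Epos P (\<lambda>\<omega>. ennreal (U \<omega> 1)) < \<infinity>"
    and P: "P \<in> QT X Qr T"
  shows "CE (completion P) (\<lambda>\<omega> c. Uext (U \<omega>) c)"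
    and "\<And>c. 0 < c \<Longrightarrow> integrable (completion P) (\<lambda>\<omega>. U \<omega> c)"
    and "\<And>c. 0 < c \<Longrightarrow> (\<lambda>\<omega>. U \<omega> c) \<in> borel_measurable (completion P)"
    and "\<And>\<omega>. \<omega> \<in> space (completion P) \<Longrightarrow> utility (U \<omega>)"
proof -
  have uw: "\<And>\<omega>. \<omega> \<in> space (completion P) \<Longrightarrow> utility (U \<omega>)"
    using RU Pspace[OF P] unfolding random_utility_def by auto
  have um: "\<And>c. 0 < c \<Longrightarrow> (\<lambda>\<omega>. U \<omega> c) \<in> borel_measurable (completion P)"
    using RU meas_univP[OF P] unfolding random_utility_def by auto
  have neg: "(\<integral>\<^sup>+\<omega>. ennreal (- U \<omega> c) \<partial>completion P) < \<infinity>" if c: "0 < c" for c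
  proof -
    have "Epos P (\<lambda>\<omega>. ennreal (- U \<omega> c)) \<le> (SUP P\<in>QT X Qr T. Epos P (\<lambda>\<omega>. ennreal (- U \<omega> c)))"
      by (rule SUP_upper[OF P])
    also have "\<dots> < \<infinity>" using H2 c by auto
    finally show ?thesis unfolding Epos_def .
  qed
  have p1: "(\<integral>\<^sup>+\<omega>. ennreal (U \<omega> 1) \<partial>completion P) < \<infinity>" using H3 P unfolding Epos_def by auto
  have pos: "(\<integral>\<^sup>+\<omega>. ennreal (U \<omega> c) \<partial>completion P) < \<infinity>" if c: "0 < c" for c
  proof (cases "c \<le> 1")
    case True
    have "(\<integral>\<^sup>+\<omega>. ennreal (U \<omega> c) \<partial>completion P) \<le> (\<integral>\<^sup>+\<omega>. ennreal (U \<omega> 1) \<partial>completion P)"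
      by (rule nn_integral_mono) (use True c in \<open>auto intro!: ennreal_leI utility_le[OF uw]\<close>)
    then show ?thesis using p1 by (simp add: le_less_trans)
  next
    case False
    then have c1: "1 < c" by auto
    have "(\<integral>\<^sup>+\<omega>. ennreal (U \<omega> c) \<partial>completion P)
        \<le> (\<integral>\<^sup>+\<omega>. ennreal (2 * c - 1) * ennreal (U \<omega> 1) + ennreal (2 * c - 2) * ennreal (- U \<omega> (1/2)) \<partial>completion P)"
    proof (rule nn_integral_mono)
      fix \<omega> assume w: "\<omega> \<in> space (completion P)"
      have b: "U \<omega> c \<le> (2 * c - 1) * U \<omega> 1 - (2 * c - 2) * U \<omega> (1/2)"
        by (rule utility_concave_bound[OF uw[OF w] c1])
      also have "\<dots> \<le> (2 * c - 1) * max (U \<omega> 1) 0 + (2 * c - 2) * max (- U \<omega> (1/2)) 0"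
      proof -
        have h1: "(2*c-1) * U \<omega> 1 \<le> (2*c-1) * max (U \<omega> 1) 0" using c1 by (intro mult_left_mono) auto
        have h2: "(2*c-2) * (- U \<omega> (1/2)) \<le> (2*c-2) * max (- U \<omega> (1/2)) 0" using c1 by (intro mult_left_mono) auto
        show ?thesis using h1 h2 by (simp add: algebra_simps)
      qed
      finally have "ennreal (U \<omega> c) \<le> ennreal ((2 * c - 1) * max (U \<omega> 1) 0 + (2 * c - 2) * max (- U \<omega> (1/2)) 0)"
        by (rule ennreal_leI)
      also have "\<dots> = ennreal (2 * c - 1) * ennreal (U \<omega> 1) + ennreal (2 * c - 2) * ennreal (- U \<omega> (1/2))"
        using c1 by (simp add: ennreal_plus ennreal_mult ennreal_max_0 del: ennreal_plus[symmetric])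
      finally show "ennreal (U \<omega> c) \<le> ennreal (2 * c - 1) * ennreal (U \<omega> 1) + ennreal (2 * c - 2) * ennreal (- U \<omega> (1/2))" .
    qed
    also have "\<dots> = ennreal (2 * c - 1) * (\<integral>\<^sup>+\<omega>. ennreal (U \<omega> 1) \<partial>completion P)
        + ennreal (2 * c - 2) * (\<integral>\<^sup>+\<omega>. ennreal (- U \<omega> (1/2)) \<partial>completion P)"
      using um[of 1] um[of "1/2"]
      by (subst nn_integral_add) (auto simp: nn_integral_cmult)
    also have "\<dots> < \<infinity>" using p1 neg[of "1/2"] by (simp add: ennreal_mult_less_top less_top)
    finally show ?thesis .
  qed
  have ui: "integrable (completion P) (\<lambda>\<omega>. U \<omega> c)" if c: "0 < c" for c
  proof -
    have "(\<integral>\<^sup>+\<omega>. ennreal (norm (U \<omega> c)) \<partial>completion P)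
        = (\<integral>\<^sup>+\<omega>. ennreal (U \<omega> c) + ennreal (- U \<omega> c) \<partial>completion P)"
      by (rule nn_integral_cong) (auto simp: ennreal_neg abs_real_def)
    also have "\<dots> = (\<integral>\<^sup>+\<omega>. ennreal (U \<omega> c) \<partial>completion P) + (\<integral>\<^sup>+\<omega>. ennreal (- U \<omega> c) \<partial>completion P)"
      using um[OF c] by (subst nn_integral_add) auto
    also have "\<dots> < \<infinity>" using pos[OF c] neg[OF c] by (simp add: less_top)
    finally show ?thesis unfolding integrable_iff_bounded using um[OF c] by auto
  qed
  show "CE (completion P) (\<lambda>\<omega> c. Uext (U \<omega>) c)"
    by (rule CE_rand[OF Pprob[OF P] uw um ui])
  show "\<And>c. 0 < c \<Longrightarrow> integrable (completion P) (\<lambda>\<omega>. U \<omega> c)" by (rule ui)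
  show "\<And>c. 0 < c \<Longrightarrow> (\<lambda>\<omega>. U \<omega> c) \<in> borel_measurable (completion P)" by (rule um)
  show "\<And>\<omega>. \<omega> \<in> space (completion P) \<Longrightarrow> utility (U \<omega>)" by (rule uw)
qed

end

lemma ereal_le_abs: "(x::ereal) \<le> \<bar>x\<bar>" "- (x::ereal) \<le> \<bar>x\<bar>"
  by (cases x; auto)+

context setting begin

lemma part1_basic:
  assumes RU: "random_utility X T U"
    and H2: "\<forall>y>0. (SUP P\<in>QT X Qr T. Epos P (\<lambda>\<omega>. ennreal (- U \<omega> y))) < \<infinity>"
    and H3: "\<forall>P\<in>QT X Qr T. Epos P (\<lambda>\<omega>. ennreal (U \<omega> 1)) < \<infinity>"
    and H4: "\<forall>P\<in>QT X Qr T. Epos P (\<lambda>\<omega>. e2ennreal \<bar>Uext (U \<omega>) (enn2real (G \<omega>))\<bar>) < \<infinity>"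
    and P: "P \<in> QT X Qr T"
  shows "\<exists>!c::real. 0 \<le> c \<and>
           Eexp P (\<lambda>\<omega>. Uext (U \<omega>) c) = Eexp P (\<lambda>\<omega>. Uext (U \<omega>) (enn2real (G \<omega>)))"
    and "\<And>c. 0 < c \<Longrightarrow> Eexp P (\<lambda>\<omega>. Uext (U \<omega>) c) = ereal (\<integral>\<omega>. U \<omega> c \<partial>completion P)"
    and "\<And>x y. 0 \<le> x \<Longrightarrow> x \<le> y \<Longrightarrow> Eexp P (\<lambda>\<omega>. Uext (U \<omega>) x) \<le> Eexp P (\<lambda>\<omega>. Uext (U \<omega>) y)"
    and "Eexp P (\<lambda>\<omega>. Uext (U \<omega>) 0) = (INF n. Eexp P (\<lambda>\<omega>. Uext (U \<omega>) (1 / Suc n)))"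
    and "Eexp P (\<lambda>\<omega>. Uext (U \<omega>) 0) \<le> Eexp P (\<lambda>\<omega>. Uext (U \<omega>) (enn2real (G \<omega>)))"
    and "\<bar>Eexp P (\<lambda>\<omega>. Uext (U \<omega>) (enn2real (G \<omega>)))\<bar> \<noteq> \<infinity>"
proof -
  note S = part1_setup[OF RU H2 H3 P]
  define V where "V = (\<lambda>\<omega> c. Uext (U \<omega>) c)"
  have ce: "CE (completion P) V" using S(1) unfolding V_def .
  have FpF: "Eexp P (\<lambda>\<omega>. Uext (U \<omega>) c) = CE.F (completion P) V c" for c
    using CE.F_def[OF ce, of c] unfolding Eexp_EE V_def by simp
  define g where "g \<omega> = enn2real (G \<omega>)" for \<omega>
  have gm: "g \<in> borel_measurable (completion P)" using g_measP[OF P] unfolding g_def .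
  have g0: "0 \<le> g \<omega>" for \<omega> unfolding g_def by auto
  have H4P: "(\<integral>\<^sup>+\<omega>. e2ennreal \<bar>Uext (U \<omega>) (g \<omega>)\<bar> \<partial>completion P) < \<infinity>"
    using H4 P unfolding Epos_def g_def by auto
  have Zp: "(\<integral>\<^sup>+\<omega>. e2ennreal (V \<omega> (g \<omega>)) \<partial>completion P) < \<infinity>"
    by (rule le_less_trans[OF _ H4P], rule nn_integral_mono) (auto simp: V_def intro!: e2ennreal_mono ereal_le_abs)
  have Zn: "(\<integral>\<^sup>+\<omega>. e2ennreal (- V \<omega> (g \<omega>)) \<partial>completion P) < \<infinity>"
    by (rule le_less_trans[OF _ H4P], rule nn_integral_mono) (auto simp: V_def intro!: e2ennreal_mono ereal_le_abs)
  have ZEE: "Eexp P (\<lambda>\<omega>. Uext (U \<omega>) (enn2real (G \<omega>))) = EE (completion P) (\<lambda>\<omega>. V \<omega> (g \<omega>))"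
    unfolding Eexp_EE V_def g_def ..
  show "\<exists>!c::real. 0 \<le> c \<and>
           Eexp P (\<lambda>\<omega>. Uext (U \<omega>) c) = Eexp P (\<lambda>\<omega>. Uext (U \<omega>) (enn2real (G \<omega>)))"
    unfolding FpF ZEE by (rule CE.CE_unique[OF ce gm g0 Zp Zn])
  show "\<And>c. 0 < c \<Longrightarrow> Eexp P (\<lambda>\<omega>. Uext (U \<omega>) c) = ereal (\<integral>\<omega>. U \<omega> c \<partial>completion P)"
  proof -
    fix c :: real assume c: "0 < c"
    have vr: "CE.vr V c = (\<lambda>\<omega>. U \<omega> c)"
      by (rule ext) (unfold CE.vr_def[OF ce], simp add: V_def Uext_pos c)
    show "Eexp P (\<lambda>\<omega>. Uext (U \<omega>) c) = ereal (\<integral>\<omega>. U \<omega> c \<partial>completion P)"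
      unfolding FpF CE.F_eq[OF ce c] vr ..
  qed
  show "\<And>x y. 0 \<le> x \<Longrightarrow> x \<le> y \<Longrightarrow> Eexp P (\<lambda>\<omega>. Uext (U \<omega>) x) \<le> Eexp P (\<lambda>\<omega>. Uext (U \<omega>) y)"
    unfolding FpF by (rule CE.F_le[OF ce])
  show "Eexp P (\<lambda>\<omega>. Uext (U \<omega>) 0) = (INF n. Eexp P (\<lambda>\<omega>. Uext (U \<omega>) (1 / Suc n)))"
    unfolding FpF by (rule CE.F_0[OF ce])
  show "Eexp P (\<lambda>\<omega>. Uext (U \<omega>) 0) \<le> Eexp P (\<lambda>\<omega>. Uext (U \<omega>) (enn2real (G \<omega>)))"
    unfolding Eexp_EE by (rule EE_mono) (auto intro!: Uext_le S(4))
  have Zm: "(\<lambda>\<omega>. V \<omega> (g \<omega>)) \<in> borel_measurable (completion P)"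
    by (rule CE.Vg_meas[OF ce gm g0])
  show "\<bar>Eexp P (\<lambda>\<omega>. Uext (U \<omega>) (enn2real (G \<omega>)))\<bar> \<noteq> \<infinity>"
    unfolding ZEE using EE_integrable(3)[OF Zm Zp Zn] by simp
qed

end

lemma ennreal_less_add_pos: 
  assumes "(a::ennreal) < \<top>" "0 < e" shows "a < a + ennreal e"
proof -
  obtain r where r: "a = ennreal r" "0 \<le> r" using assms(1) by (cases a rule: ennreal_cases) auto
  have "ennreal r < ennreal (r + e)" using assms(2) r(2) by (subst ennreal_less_iff) auto
  then show ?thesis using r assms(2) by (simp add: ennreal_plus)
qed

context setting begin

lemma qs_norm_AE:
  assumes B1: "\<exists>M::real. qs (Om X T) (QT X Qr T) (\<lambda>\<omega>. G \<omega> \<le> ennreal M)"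
  shows "qs_norm (Om X T) (QT X Qr T) G < \<infinity>"
    and "\<And>P. P \<in> QT X Qr T \<Longrightarrow> AE \<omega> in completion P. G \<omega> \<le> qs_norm (Om X T) (QT X Qr T) G"
proof -
  define S where "S = {M. qs (Om X T) (QT X Qr T) (\<lambda>\<omega>. G \<omega> \<le> M)}"
  define L where "L = qs_norm (Om X T) (QT X Qr T) G"
  have LS: "L = Inf S" unfolding L_def S_def qs_norm_def ..
  obtain M0 :: real where M0: "qs (Om X T) (QT X Qr T) (\<lambda>\<omega>. G \<omega> \<le> ennreal M0)" using B1 by auto
  have "L \<le> ennreal M0" unfolding LS S_def using M0 by (intro Inf_lower) auto
  then show Lfin: "qs_norm (Om X T) (QT X Qr T) G < \<infinity>" unfolding L_def by (simp add: le_less_trans)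
  fix P assume P: "P \<in> QT X Qr T"
  have ex: "\<exists>M. M \<in> S \<and> M < L + ennreal (1 / Suc n)" for n
  proof -
    have Lf: "L < \<top>" using Lfin unfolding L_def by simp
    have "Inf S < L + ennreal (1 / Suc n)" unfolding LS[symmetric]
      by (rule ennreal_less_add_pos[OF Lf]) simp
    then show ?thesis unfolding Inf_less_iff by blast
  qed
  define Mn where "Mn n = (SOME M. M \<in> S \<and> M < L + ennreal (1 / Suc n))" for n
  have Mn: "Mn n \<in> S" "Mn n < L + ennreal (1 / Suc n)" for n
    using someI_ex[OF ex[of n]] unfolding Mn_def by auto
  have "AE \<omega> in completion P. G \<omega> \<le> Mn n" for n
    using qs_AE[OF _ P Pprobs[OF P]] Mn(1)[of n] unfolding S_def by auto
  then have "AE \<omega> in completion P. \<forall>n. G \<omega> \<le> Mn n" by (simp add: AE_all_countable)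
  then show "AE \<omega> in completion P. G \<omega> \<le> qs_norm (Om X T) (QT X Qr T) G"
  proof eventually_elim
    fix \<omega> assume a: "\<forall>n. G \<omega> \<le> Mn n"
    show "G \<omega> \<le> qs_norm (Om X T) (QT X Qr T) G" unfolding L_def[symmetric]
    proof (rule ennreal_le_epsilon)
      fix e :: real assume e: "0 < e"
      obtain n where n: "1 / real (Suc n) < e" using nat_approx_posE[OF e] by auto
      have "G \<omega> \<le> Mn n" using a by auto
      also have "\<dots> \<le> L + ennreal (1 / Suc n)" using Mn(2)[of n] by simp
      also have "\<dots> \<le> L + ennreal e" using n by (intro add_left_mono ennreal_leI) auto
      finally show "G \<omega> \<le> L + ennreal e" .
    qed
  qed
qed

end

context setting begin

lemma part1b:
  assumes RU: "random_utility X T U"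
    and H2: "\<forall>y>0. (SUP P\<in>QT X Qr T. Epos P (\<lambda>\<omega>. ennreal (- U \<omega> y))) < \<infinity>"
    and H3: "\<forall>P\<in>QT X Qr T. Epos P (\<lambda>\<omega>. ennreal (U \<omega> 1)) < \<infinity>"
    and H4: "\<forall>P\<in>QT X Qr T. Epos P (\<lambda>\<omega>. e2ennreal \<bar>Uext (U \<omega>) (enn2real (G \<omega>))\<bar>) < \<infinity>"
    and B1: "\<exists>M::real. qs (Om X T) (QT X Qr T) (\<lambda>\<omega>. G \<omega> \<le> ennreal M)"
    and B2: "(SUP P\<in>QT X Qr T. Epos P (\<lambda>\<omega>. e2ennreal (- Uext (U \<omega>) (enn2real (G \<omega>))))) < \<infinity>"
    and B3: "\<forall>z>0. (INF P\<in>QT X Qr T. Epos P (\<lambda>\<omega>. ennreal (deriv (U \<omega>) z))) > 0"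
  shows "(\<exists>!c::real. 0 \<le> c \<and> ennreal c \<le> qs_norm (Om X T) (QT X Qr T) G \<and>
            (INF P\<in>QT X Qr T. Eexp P (\<lambda>\<omega>. Uext (U \<omega>) c))
              = (INF P\<in>QT X Qr T. Eexp P (\<lambda>\<omega>. Uext (U \<omega>) (enn2real (G \<omega>)))))
         \<and> (\<forall>c::real. 0 \<le> c \<and> ennreal c \<le> qs_norm (Om X T) (QT X Qr T) G \<and>
            (INF P\<in>QT X Qr T. Eexp P (\<lambda>\<omega>. Uext (U \<omega>) c))
              = (INF P\<in>QT X Qr T. Eexp P (\<lambda>\<omega>. Uext (U \<omega>) (enn2real (G \<omega>))))
            \<longrightarrow> c \<ge> (INF P\<in>QT X Qr T. (THE e::real. 0 \<le> e \<and>
                   Eexp P (\<lambda>\<omega>. Uext (U \<omega>) e) = Eexp P (\<lambda>\<omega>. Uext (U \<omega>) (enn2real (G \<omega>))))))"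
proof -
  define Q where "Q = QT X Qr T"
  define Fp where "Fp P c = Eexp P (\<lambda>\<omega>. Uext (U \<omega>) c)" for P c
  define Zp where "Zp P = Eexp P (\<lambda>\<omega>. Uext (U \<omega>) (enn2real (G \<omega>)))" for P
  define phi where "phi c = (INF P\<in>Q. Fp P c)" for c
  define phiG where "phiG = (INF P\<in>Q. Zp P)"
  define fr where "fr P c = (\<integral>\<omega>. U \<omega> c \<partial>completion P)" for P c
  define L where "L = qs_norm (Om X T) (QT X Qr T) G"
  obtain P0 where P0: "P0 \<in> Q" using QT_ne unfolding Q_def by auto
  have Qne: "Q \<noteq> {}" using P0 by auto
  note B = part1_basic[OF RU H2 H3 H4, folded Q_def Fp_def Zp_def]
  note S = part1_setup[OF RU H2 H3, folded Q_def]
  have uniqP: "\<exists>!c. 0 \<le> c \<and> Fp P c = Zp P" if "P \<in> Q" for P using B(1)[OF that] .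
  have Fp_eq: "Fp P c = ereal (fr P c)" if "P \<in> Q" "0 < c" for P c using B(2)[OF that] unfolding fr_def .
  have Fp_le: "Fp P x \<le> Fp P y" if "P \<in> Q" "0 \<le> x" "x \<le> y" for P x y using B(3)[OF that] .
  have Fp_0: "Fp P 0 = (INF n. Fp P (1 / Suc n))" if "P \<in> Q" for P using B(4)[OF that] .
  have Fp_Z: "Fp P 0 \<le> Zp P" if "P \<in> Q" for P using B(5)[OF that] .
  have Zp_fin: "\<bar>Zp P\<bar> \<noteq> \<infinity>" if "P \<in> Q" for P using B(6)[OF that] .
  have phi_le: "phi x \<le> phi y" if "0 \<le> x" "x \<le> y" for x y
    unfolding phi_def by (rule INF_mono) (use Fp_le that in blast)
  have Lfin: "L < \<infinity>" using qs_norm_AE(1)[OF B1] unfolding L_def .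
  define l where "l = enn2real L"
  have Ll: "L = ennreal l" unfolding l_def using Lfin by (simp add: ennreal_enn2real less_top)
  have l0: "0 \<le> l" unfolding l_def by simp
  have Zp_l: "Zp P \<le> Fp P l" if P: "P \<in> Q" for P
  proof -
    have "AE \<omega> in completion P. G \<omega> \<le> L" using qs_norm_AE(2)[OF B1] P unfolding L_def Q_def by auto
    then have "AE \<omega> in completion P. Uext (U \<omega>) (enn2real (G \<omega>)) \<le> Uext (U \<omega>) l"
      using AE_space
    proof eventually_elim
      fix \<omega> assume a: "G \<omega> \<le> L" and w: "\<omega> \<in> space (completion P)"
      have "enn2real (G \<omega>) \<le> l" unfolding l_def by (rule enn2real_mono[OF a]) (use Lfin in auto)
      then show "Uext (U \<omega>) (enn2real (G \<omega>)) \<le> Uext (U \<omega>) l"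
        by (intro Uext_le S(4)[OF P w]) auto
    qed
    then show ?thesis unfolding Zp_def Fp_def Eexp_EE by (rule EE_mono_AE)
  qed
  have phiG_l: "phiG \<le> phi l"
    unfolding phiG_def phi_def by (rule INF_mono) (use Zp_l in blast)
  have phi0G: "phi 0 \<le> phiG"
    unfolding phiG_def phi_def by (rule INF_mono) (use Fp_Z in blast)
  define C2 where "C2 = (SUP P\<in>Q. Epos P (\<lambda>\<omega>. e2ennreal (- Uext (U \<omega>) (enn2real (G \<omega>)))))"
  have C2fin: "C2 < \<infinity>" using B2 unfolding C2_def Q_def .
  have phiG_lb: "- enn2ereal C2 \<le> phiG"
    unfolding phiG_def
  proof (rule INF_greatest)
    fix P assume P: "P \<in> Q"
    have "Epos P (\<lambda>\<omega>. e2ennreal (- Uext (U \<omega>) (enn2real (G \<omega>)))) \<le> C2" unfolding C2_def using P by (rule SUP_upper)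
    then have "- enn2ereal C2 \<le> - enn2ereal (Epos P (\<lambda>\<omega>. e2ennreal (- Uext (U \<omega>) (enn2real (G \<omega>)))))"
      by (simp add: less_eq_ennreal.rep_eq)
    also have "\<dots> \<le> Zp P" unfolding Zp_def Eexp_EE Epos_def by (rule EE_ge)
    finally show "- enn2ereal C2 \<le> Zp P" .
  qed
  have phiG_fin: "\<bar>phiG\<bar> \<noteq> \<infinity>"
  proof -
    have "phiG \<noteq> -\<infinity>" using phiG_lb C2fin by (auto simp: enn2ereal_fin)
    moreover have "phiG \<le> Zp P0" unfolding phiG_def by (rule INF_lower[OF P0])
    then have "phiG \<noteq> \<infinity>" using Zp_fin[OF P0] by auto
    ultimately show ?thesis by auto
  qed
  have fr_lb: "\<exists>B. \<forall>P\<in>Q. B \<le> fr P c" if c: "0 < c" for c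
  proof -
    define Cc where "Cc = (SUP P\<in>Q. Epos P (\<lambda>\<omega>. ennreal (- U \<omega> c)))"
    have Ccfin: "Cc < \<infinity>" using H2 c unfolding Cc_def Q_def by auto
    have "- enn2real Cc \<le> fr P c" if P: "P \<in> Q" for P
    proof -
      have "Epos P (\<lambda>\<omega>. ennreal (- U \<omega> c)) \<le> Cc" unfolding Cc_def using P by (rule SUP_upper)
      then have "- enn2ereal Cc \<le> - enn2ereal (Epos P (\<lambda>\<omega>. ennreal (- U \<omega> c)))"
        by (simp add: less_eq_ennreal.rep_eq)
      also have "Epos P (\<lambda>\<omega>. ennreal (- U \<omega> c)) = Epos P (\<lambda>\<omega>. e2ennreal (- Uext (U \<omega>) c))"
        using c by (simp add: Epos_def Uext_pos e2ennreal_ereal)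
      also have "- enn2ereal \<dots> \<le> Fp P c" unfolding Fp_def Eexp_EE Epos_def by (rule EE_ge)
      also have "\<dots> = ereal (fr P c)" by (rule Fp_eq[OF P c])
      finally show ?thesis using Ccfin by (simp add: enn2ereal_fin)
    qed
    then show ?thesis by blast
  qed
  have bdd: "bdd_below ((\<lambda>P. fr P c) ` Q)" if c: "0 < c" for c
    using fr_lb[OF c] by (auto simp: bdd_below_def)
  define phir where "phir c = (INF P\<in>Q. fr P c)" for c
  have phi_eq: "phi c = ereal (phir c)" if c: "0 < c" for c
  proof -
    have "phi c = (INF P\<in>Q. ereal (fr P c))" unfolding phi_def using Fp_eq c by (intro INF_cong) auto
    also have "\<dots> = Inf (ereal ` ((\<lambda>P. fr P c) ` Q))" by (simp add: image_image)
    also have "\<dots> = ereal (phir c)" unfolding phir_def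
      by (rule ereal_Inf'[symmetric]) (use bdd[OF c] Qne in auto)
    finally show ?thesis .
  qed
  have phir_concave: "concave_on {0<..} phir"
  proof (rule concave_on_linorderI)
    show "convex {0::real<..}" by simp
    fix t x y :: real assume t: "0 < t" "t < 1" and x: "x \<in> {0<..}" and y: "y \<in> {0<..}" and xy: "x < y"
    define z where "z = (1 - t) *\<^sub>R x + t *\<^sub>R y"
    have z: "0 < z" unfolding z_def using t x y by (auto intro!: add_pos_pos)
    have fr_conc: "(1 - t) * fr P x + t * fr P y \<le> fr P z" if P: "P \<in> Q" for P
    proof -
      have ix: "integrable (completion P) (\<lambda>\<omega>. U \<omega> x)" using S(2)[OF P] x by auto
      have iy: "integrable (completion P) (\<lambda>\<omega>. U \<omega> y)" using S(2)[OF P] y by auto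
      have iz: "integrable (completion P) (\<lambda>\<omega>. U \<omega> z)" using S(2)[OF P] z by auto
      have "(1 - t) * fr P x + t * fr P y = (\<integral>\<omega>. (1 - t) * U \<omega> x + t * U \<omega> y \<partial>completion P)"
        unfolding fr_def using ix iy by simp
      also have "\<dots> \<le> fr P z" unfolding fr_def
      proof (rule integral_mono)
        show "integrable (completion P) (\<lambda>\<omega>. (1 - t) * U \<omega> x + t * U \<omega> y)" using ix iy by auto
        show "integrable (completion P) (\<lambda>\<omega>. U \<omega> z)" by (rule iz)
        fix \<omega> assume w: "\<omega> \<in> space (completion P)"
        have "concave_on {0<..} (U \<omega>)" using S(4)[OF P w] unfolding utility_def by auto
        then show "(1 - t) * U \<omega> x + t * U \<omega> y \<le> U \<omega> z"
          unfolding z_def by (rule concave_onD) (use t x y in auto)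
      qed
      finally show ?thesis .
    qed
    show "(1 - t) * phir x + t * phir y \<le> phir ((1 - t) *\<^sub>R x + t *\<^sub>R y)"
      unfolding z_def[symmetric] phir_def
    proof (rule cINF_greatest[OF Qne])
      fix P assume P: "P \<in> Q"
      have "(1 - t) * (INF P\<in>Q. fr P x) \<le> (1 - t) * fr P x"
        using t by (intro mult_left_mono cINF_lower[OF bdd P]) (use x in auto)
      moreover have "t * (INF P\<in>Q. fr P y) \<le> t * fr P y"
        using t by (intro mult_left_mono cINF_lower[OF bdd P]) (use y in auto)
      ultimately show "(1 - t) * (INF P\<in>Q. fr P x) + t * (INF P\<in>Q. fr P y) \<le> fr P z"
        using fr_conc[OF P] by linarith
    qed
  qed
  have phir_cont: "continuous_on {0<..} phir"
  proof -
    have "convex_on {0<..} (\<lambda>x. - phir x)" using phir_concave unfolding convex_on_iff_concave by simp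
    then have "continuous_on {0<..} (\<lambda>x. - phir x)" by (rule convex_on_continuous[rotated]) simp
    then have "continuous_on {0<..} (\<lambda>x. - (- phir x))" by (rule continuous_on_minus)
    then show ?thesis by simp
  qed
  have gap: "\<exists>\<kappa>>0. \<forall>P\<in>Q. Fp P c' + ereal \<kappa> \<le> Fp P d" if c': "0 < c'" "c' < d" for c' d
  proof -
    have d: "0 < d" using c' by auto
    define \<delta> where "\<delta> = (INF P\<in>Q. Epos P (\<lambda>\<omega>. ennreal (deriv (U \<omega>) d)))"
    have \<delta>0: "0 < \<delta>" using B3 d unfolding \<delta>_def Q_def by auto
    define \<eta> where "\<eta> = enn2real (min \<delta> 1)"
    have mfin: "min \<delta> 1 < \<top>" by (simp add: min_less_iff_disj)
    have \<eta>0: "0 < \<eta>" unfolding \<eta>_def using \<delta>0 mfin by (simp add: enn2real_positive_iff)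
    have \<eta>le: "ennreal \<eta> \<le> Epos P (\<lambda>\<omega>. ennreal (deriv (U \<omega>) d))" if P: "P \<in> Q" for P
    proof -
      have "ennreal \<eta> = min \<delta> 1" unfolding \<eta>_def using mfin by (simp add: ennreal_enn2real)
      also have "\<dots> \<le> \<delta>" by simp
      also have "\<dots> \<le> Epos P (\<lambda>\<omega>. ennreal (deriv (U \<omega>) d))" unfolding \<delta>_def by (rule INF_lower[OF P])
      finally show ?thesis .
    qed
    have main: "Fp P c' + ereal ((d - c') * \<eta>) \<le> Fp P d" if P: "P \<in> Q" for P
    proof -
      have dm: "(\<lambda>\<omega>. deriv (U \<omega>) d) \<in> borel_measurable (completion P)"
        by (rule deriv_meas[OF S(4)[OF P] S(3)[OF P] d])
      have ic: "integrable (completion P) (\<lambda>\<omega>. U \<omega> c')" using S(2)[OF P] c' by auto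
      have id: "integrable (completion P) (\<lambda>\<omega>. U \<omega> d)" using S(2)[OF P] d by auto
      have nn: "0 \<le> U \<omega> d - U \<omega> c'" if w: "\<omega> \<in> space (completion P)" for \<omega>
        using utility_le[OF S(4)[OF P w], of c' d] c' by auto
      have "ennreal ((d - c') * \<eta>) = ennreal (d - c') * ennreal \<eta>" using c' \<eta>0 by (simp add: ennreal_mult)
      also have "\<dots> \<le> ennreal (d - c') * (\<integral>\<^sup>+\<omega>. ennreal (deriv (U \<omega>) d) \<partial>completion P)"
        using \<eta>le[OF P] unfolding Epos_def by (intro mult_left_mono) auto
      also have "\<dots> = (\<integral>\<^sup>+\<omega>. ennreal (d - c') * ennreal (deriv (U \<omega>) d) \<partial>completion P)"
        by (rule nn_integral_cmult[symmetric]) (use dm in measurable)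
      also have "\<dots> \<le> (\<integral>\<^sup>+\<omega>. ennreal (U \<omega> d - U \<omega> c') \<partial>completion P)"
      proof (rule nn_integral_mono)
        fix \<omega> assume w: "\<omega> \<in> space (completion P)"
        have "deriv (U \<omega>) d * (d - c') \<le> U \<omega> d - U \<omega> c'" by (rule utility_tangent[OF S(4)[OF P w] c'])
        then have "ennreal ((d - c') * deriv (U \<omega>) d) \<le> ennreal (U \<omega> d - U \<omega> c')"
          by (intro ennreal_leI) (simp add: mult.commute)
        then show "ennreal (d - c') * ennreal (deriv (U \<omega>) d) \<le> ennreal (U \<omega> d - U \<omega> c')"
          using c' by (simp add: ennreal_mult')
      qed
      also have "\<dots> = ennreal (\<integral>\<omega>. U \<omega> d - U \<omega> c' \<partial>completion P)"
        by (rule nn_integral_eq_integral) (use ic id nn in auto)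
      also have "(\<integral>\<omega>. U \<omega> d - U \<omega> c' \<partial>completion P) = fr P d - fr P c'"
        unfolding fr_def using ic id by simp
      finally have le: "ennreal ((d - c') * \<eta>) \<le> ennreal (fr P d - fr P c')" .
      have "0 \<le> fr P d - fr P c'"
      proof -
        have "fr P c' \<le> fr P d" unfolding fr_def by (rule integral_mono[OF ic id]) (use nn in auto)
        then show ?thesis by simp
      qed
      then have "(d - c') * \<eta> \<le> fr P d - fr P c'" using le by (simp add: ennreal_le_iff)
      then show ?thesis using Fp_eq[OF P c'(1)] Fp_eq[OF P d] by simp
    qed
    show ?thesis using c' \<eta>0 main by (intro exI[of _ "(d - c') * \<eta>"]) auto
  qed
  have strict: "\<exists>\<kappa>>0. phi c + ereal \<kappa> \<le> phi d" if c: "0 \<le> c" "c < d" for c d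
  proof -
    define c' where "c' = (if c = 0 then d / 2 else c)"
    have c': "0 < c'" "c' < d" "c \<le> c'" using c unfolding c'_def by auto
    obtain \<kappa> where k: "\<kappa> > 0" "\<forall>P\<in>Q. Fp P c' + ereal \<kappa> \<le> Fp P d" using gap[OF c'(1,2)] by auto
    have "phi c + ereal \<kappa> \<le> phi c' + ereal \<kappa>" using phi_le[OF c(1) c'(3)] by (rule add_right_mono)
    also have "\<dots> \<le> phi d"
      unfolding phi_def[of d]
    proof (rule INF_greatest)
      fix P assume P: "P \<in> Q"
      have "phi c' \<le> Fp P c'" unfolding phi_def by (rule INF_lower[OF P])
      then have "phi c' + ereal \<kappa> \<le> Fp P c' + ereal \<kappa>" by (rule add_right_mono)
      also have "\<dots> \<le> Fp P d" using k P by auto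
      finally show "phi c' + ereal \<kappa> \<le> Fp P d" .
    qed
    finally show ?thesis using k by auto
  qed
  obtain r where r: "phiG = ereal r" using phiG_fin by (cases phiG) auto
  have ex: "\<exists>c. 0 \<le> c \<and> ennreal c \<le> L \<and> phi c = phiG"
  proof (cases "phi 0 = phiG")
    case True then show ?thesis by (intro exI[of _ 0]) auto
  next
    case False
    then have "phi 0 < phiG" using phi0G by auto
    then obtain P where P: "P \<in> Q" "Fp P 0 < phiG" unfolding phi_def INF_less_iff by auto
    then obtain n where n: "Fp P (1 / Suc n) < phiG" using Fp_0[OF P(1)] by (auto simp: INF_less_iff)
    define e where "e = 1 / real (Suc n)"
    have e0: "0 < e" unfolding e_def by auto
    have pe: "phi e < phiG"
    proof -
      have "phi e \<le> Fp P e" unfolding phi_def by (rule INF_lower[OF P(1)])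
      then show ?thesis using n unfolding e_def by auto
    qed
    have el: "e < l"
    proof (rule ccontr)
      assume "\<not> e < l"
      then have "phi l \<le> phi e" using l0 by (intro phi_le) auto
      then show False using pe phiG_l by auto
    qed
    have l_pos: "0 < l" using e0 el by auto
    have "phir e \<le> r" using pe phi_eq[OF e0] r by auto
    moreover have "r \<le> phir l" using phiG_l phi_eq[OF l_pos] r by auto
    moreover have "continuous_on {e..l} phir"
      by (rule continuous_on_subset[OF phir_cont]) (use e0 in auto)
    ultimately obtain c where c: "e \<le> c" "c \<le> l" "phir c = r"
      using IVT'[of phir e r l] el by auto
    have "phi c = phiG" using phi_eq[of c] c e0 r by auto
    moreover have "ennreal c \<le> L" unfolding Ll using c by (intro ennreal_leI) auto
    ultimately show ?thesis using c e0 by (intro exI[of _ c]) auto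
  qed
  have res1: "\<exists>!c. 0 \<le> c \<and> ennreal c \<le> L \<and> phi c = phiG"
  proof (rule ex_ex1I)
    show "\<exists>c. 0 \<le> c \<and> ennreal c \<le> L \<and> phi c = phiG" by (rule ex)
    fix c d assume c: "0 \<le> c \<and> ennreal c \<le> L \<and> phi c = phiG" and d: "0 \<le> d \<and> ennreal d \<le> L \<and> phi d = phiG"
    show "c = d"
    proof (rule ccontr)
      assume "c \<noteq> d"
      then have "c < d \<or> d < c" by auto
      then show False
      proof
        assume "c < d"
        then obtain \<kappa> where "\<kappa> > 0" "phi c + ereal \<kappa> \<le> phi d" using strict c by blast
        then show False using c d r by auto
      next
        assume "d < c"
        then obtain \<kappa> where "\<kappa> > 0" "phi d + ereal \<kappa> \<le> phi c" using strict d by blast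
        then show False using c d r by auto
      qed
    qed
  qed
  define eP where "eP P = (THE e. 0 \<le> e \<and> Fp P e = Zp P)" for P
  have eP: "0 \<le> eP P" "Fp P (eP P) = Zp P" if P: "P \<in> Q" for P
    using theI'[OF uniqP[OF P]] unfolding eP_def by auto
  have bddP: "bdd_below (eP ` Q)" using eP(1) by (auto intro!: bdd_belowI[of _ 0])
  have res2: "c \<ge> (INF P\<in>Q. eP P)" if c: "0 \<le> c" "phi c = phiG" for c
  proof (rule ccontr)
    assume "\<not> c \<ge> (INF P\<in>Q. eP P)"
    then have lt: "c < (INF P\<in>Q. eP P)" by auto
    define d where "d = (INF P\<in>Q. eP P)"
    define c' where "c' = (c + d) / 2"
    have c': "0 < c'" "c' < d" "c \<le> c'" using c lt unfolding c'_def d_def by auto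
    obtain \<kappa> where k: "\<kappa> > 0" "\<forall>P\<in>Q. Fp P c' + ereal \<kappa> \<le> Fp P d" using gap[OF c'(1,2)] by auto
    have "phi c + ereal \<kappa> \<le> phiG"
      unfolding phiG_def
    proof (rule INF_greatest)
      fix P assume P: "P \<in> Q"
      have "phi c \<le> phi c'" by (rule phi_le[OF c(1) c'(3)])
      also have "\<dots> \<le> Fp P c'" unfolding phi_def by (rule INF_lower[OF P])
      finally have "phi c + ereal \<kappa> \<le> Fp P c' + ereal \<kappa>" by (rule add_right_mono)
      also have "\<dots> \<le> Fp P d" using k P by auto
      also have "\<dots> \<le> Fp P (eP P)"
        using c'(1,2) cINF_lower[OF bddP P] unfolding d_def by (intro Fp_le[OF P]) auto
      also have "\<dots> = Zp P" by (rule eP(2)[OF P])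
      finally show "phi c + ereal \<kappa> \<le> Zp P" .
    qed
    then show False using c(2) r k(1) by auto
  qed
  have res: "(\<exists>!c. 0 \<le> c \<and> ennreal c \<le> L \<and> phi c = phiG)
     \<and> (\<forall>c. 0 \<le> c \<and> ennreal c \<le> L \<and> phi c = phiG \<longrightarrow> c \<ge> (INF P\<in>Q. (THE e. 0 \<le> e \<and> Fp P e = Zp P)))"
    using res1 res2 unfolding eP_def by blast
  show ?thesis
    using res unfolding phi_def phiG_def Fp_def Zp_def Q_def L_def .
qed

end

context setting begin

lemma part1:
  "(\<forall>U. random_utility X T U
       \<and> (\<forall>y>0. (SUP P\<in>QT X Qr T. Epos P (\<lambda>\<omega>. ennreal (- U \<omega> y))) < \<infinity>)
       \<and> (\<forall>P\<in>QT X Qr T. Epos P (\<lambda>\<omega>. ennreal (U \<omega> 1)) < \<infinity>)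
       \<and> (\<forall>P\<in>QT X Qr T. Epos P (\<lambda>\<omega>. e2ennreal \<bar>Uext (U \<omega>) (enn2real (G \<omega>))\<bar>) < \<infinity>)
     \<longrightarrow>
       (\<forall>P\<in>QT X Qr T. \<exists>!c::real. 0 \<le> c \<and>
           Eexp P (\<lambda>\<omega>. Uext (U \<omega>) c) = Eexp P (\<lambda>\<omega>. Uext (U \<omega>) (enn2real (G \<omega>))))
     \<and> ((\<exists>M::real. qs (Om X T) (QT X Qr T) (\<lambda>\<omega>. G \<omega> \<le> ennreal M))
         \<and> (SUP P\<in>QT X Qr T. Epos P (\<lambda>\<omega>. e2ennreal (- Uext (U \<omega>) (enn2real (G \<omega>))))) < \<infinity>
         \<and> (\<forall>z>0. (INF P\<in>QT X Qr T. Epos P (\<lambda>\<omega>. ennreal (deriv (U \<omega>) z))) > 0)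
        \<longrightarrow>
         (\<exists>!c::real. 0 \<le> c \<and> ennreal c \<le> qs_norm (Om X T) (QT X Qr T) G \<and>
            (INF P\<in>QT X Qr T. Eexp P (\<lambda>\<omega>. Uext (U \<omega>) c))
              = (INF P\<in>QT X Qr T. Eexp P (\<lambda>\<omega>. Uext (U \<omega>) (enn2real (G \<omega>)))))
         \<and> (\<forall>c::real. 0 \<le> c \<and> ennreal c \<le> qs_norm (Om X T) (QT X Qr T) G \<and>
            (INF P\<in>QT X Qr T. Eexp P (\<lambda>\<omega>. Uext (U \<omega>) c))
              = (INF P\<in>QT X Qr T. Eexp P (\<lambda>\<omega>. Uext (U \<omega>) (enn2real (G \<omega>))))
            \<longrightarrow> c \<ge> (INF P\<in>QT X Qr T. (THE e::real. 0 \<le> e \<and>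
                   Eexp P (\<lambda>\<omega>. Uext (U \<omega>) e) = Eexp P (\<lambda>\<omega>. Uext (U \<omega>) (enn2real (G \<omega>))))))))"
proof (rule allI, rule impI)
  fix U
  assume H: "random_utility X T U
       \<and> (\<forall>y>0. (SUP P\<in>QT X Qr T. Epos P (\<lambda>\<omega>. ennreal (- U \<omega> y))) < \<infinity>)
       \<and> (\<forall>P\<in>QT X Qr T. Epos P (\<lambda>\<omega>. ennreal (U \<omega> 1)) < \<infinity>)
       \<and> (\<forall>P\<in>QT X Qr T. Epos P (\<lambda>\<omega>. e2ennreal \<bar>Uext (U \<omega>) (enn2real (G \<omega>))\<bar>) < \<infinity>)"
  then have RU: "random_utility X T U"
    and H2: "\<forall>y>0. (SUP P\<in>QT X Qr T. Epos P (\<lambda>\<omega>. ennreal (- U \<omega> y))) < \<infinity>"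
    and H3: "\<forall>P\<in>QT X Qr T. Epos P (\<lambda>\<omega>. ennreal (U \<omega> 1)) < \<infinity>"
    and H4: "\<forall>P\<in>QT X Qr T. Epos P (\<lambda>\<omega>. e2ennreal \<bar>Uext (U \<omega>) (enn2real (G \<omega>))\<bar>) < \<infinity>"
    by auto
  have A: "\<forall>P\<in>QT X Qr T. \<exists>!c::real. 0 \<le> c \<and>
           Eexp P (\<lambda>\<omega>. Uext (U \<omega>) c) = Eexp P (\<lambda>\<omega>. Uext (U \<omega>) (enn2real (G \<omega>)))"
    using part1_basic(1)[OF RU H2 H3 H4] by blast
  have BC: "(\<exists>M::real. qs (Om X T) (QT X Qr T) (\<lambda>\<omega>. G \<omega> \<le> ennreal M))
         \<and> (SUP P\<in>QT X Qr T. Epos P (\<lambda>\<omega>. e2ennreal (- Uext (U \<omega>) (enn2real (G \<omega>))))) < \<infinity>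
         \<and> (\<forall>z>0. (INF P\<in>QT X Qr T. Epos P (\<lambda>\<omega>. ennreal (deriv (U \<omega>) z))) > 0) \<longrightarrow> (\<exists>!c::real. 0 \<le> c \<and> ennreal c \<le> qs_norm (Om X T) (QT X Qr T) G \<and>
            (INF P\<in>QT X Qr T. Eexp P (\<lambda>\<omega>. Uext (U \<omega>) c))
              = (INF P\<in>QT X Qr T. Eexp P (\<lambda>\<omega>. Uext (U \<omega>) (enn2real (G \<omega>))))) \<and> (\<forall>c::real. 0 \<le> c \<and> ennreal c \<le> qs_norm (Om X T) (QT X Qr T) G \<and>
            (INF P\<in>QT X Qr T. Eexp P (\<lambda>\<omega>. Uext (U \<omega>) c))
              = (INF P\<in>QT X Qr T. Eexp P (\<lambda>\<omega>. Uext (U \<omega>) (enn2real (G \<omega>))))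
            \<longrightarrow> c \<ge> (INF P\<in>QT X Qr T. (THE e::real. 0 \<le> e \<and>
                   Eexp P (\<lambda>\<omega>. Uext (U \<omega>) e) = Eexp P (\<lambda>\<omega>. Uext (U \<omega>) (enn2real (G \<omega>))))))"
  proof (rule impI)
    assume B: "(\<exists>M::real. qs (Om X T) (QT X Qr T) (\<lambda>\<omega>. G \<omega> \<le> ennreal M))
         \<and> (SUP P\<in>QT X Qr T. Epos P (\<lambda>\<omega>. e2ennreal (- Uext (U \<omega>) (enn2real (G \<omega>))))) < \<infinity>
         \<and> (\<forall>z>0. (INF P\<in>QT X Qr T. Epos P (\<lambda>\<omega>. ennreal (deriv (U \<omega>) z))) > 0)"
    from B have B1: "\<exists>M::real. qs (Om X T) (QT X Qr T) (\<lambda>\<omega>. G \<omega> \<le> ennreal M)"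
      and B2: "(SUP P\<in>QT X Qr T. Epos P (\<lambda>\<omega>. e2ennreal (- Uext (U \<omega>) (enn2real (G \<omega>))))) < \<infinity>"
      and B3: "\<forall>z>0. (INF P\<in>QT X Qr T. Epos P (\<lambda>\<omega>. ennreal (deriv (U \<omega>) z))) > 0"
      by auto
    show "(\<exists>!c::real. 0 \<le> c \<and> ennreal c \<le> qs_norm (Om X T) (QT X Qr T) G \<and>
            (INF P\<in>QT X Qr T. Eexp P (\<lambda>\<omega>. Uext (U \<omega>) c))
              = (INF P\<in>QT X Qr T. Eexp P (\<lambda>\<omega>. Uext (U \<omega>) (enn2real (G \<omega>))))) \<and> (\<forall>c::real. 0 \<le> c \<and> ennreal c \<le> qs_norm (Om X T) (QT X Qr T) G \<and>
            (INF P\<in>QT X Qr T. Eexp P (\<lambda>\<omega>. Uext (U \<omega>) c))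
              = (INF P\<in>QT X Qr T. Eexp P (\<lambda>\<omega>. Uext (U \<omega>) (enn2real (G \<omega>))))
            \<longrightarrow> c \<ge> (INF P\<in>QT X Qr T. (THE e::real. 0 \<le> e \<and>
                   Eexp P (\<lambda>\<omega>. Uext (U \<omega>) e) = Eexp P (\<lambda>\<omega>. Uext (U \<omega>) (enn2real (G \<omega>))))))"
      by (rule part1b[OF RU H2 H3 H4 B1 B2 B3])
  qed
  show "(\<forall>P\<in>QT X Qr T. \<exists>!c::real. 0 \<le> c \<and>
           Eexp P (\<lambda>\<omega>. Uext (U \<omega>) c) = Eexp P (\<lambda>\<omega>. Uext (U \<omega>) (enn2real (G \<omega>)))) \<and> ((\<exists>M::real. qs (Om X T) (QT X Qr T) (\<lambda>\<omega>. G \<omega> \<le> ennreal M))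
         \<and> (SUP P\<in>QT X Qr T. Epos P (\<lambda>\<omega>. e2ennreal (- Uext (U \<omega>) (enn2real (G \<omega>))))) < \<infinity>
         \<and> (\<forall>z>0. (INF P\<in>QT X Qr T. Epos P (\<lambda>\<omega>. ennreal (deriv (U \<omega>) z))) > 0) \<longrightarrow> (\<exists>!c::real. 0 \<le> c \<and> ennreal c \<le> qs_norm (Om X T) (QT X Qr T) G \<and>
            (INF P\<in>QT X Qr T. Eexp P (\<lambda>\<omega>. Uext (U \<omega>) c))
              = (INF P\<in>QT X Qr T. Eexp P (\<lambda>\<omega>. Uext (U \<omega>) (enn2real (G \<omega>))))) \<and> (\<forall>c::real. 0 \<le> c \<and> ennreal c \<le> qs_norm (Om X T) (QT X Qr T) G \<and>
            (INF P\<in>QT X Qr T. Eexp P (\<lambda>\<omega>. Uext (U \<omega>) c))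
              = (INF P\<in>QT X Qr T. Eexp P (\<lambda>\<omega>. Uext (U \<omega>) (enn2real (G \<omega>))))
            \<longrightarrow> c \<ge> (INF P\<in>QT X Qr T. (THE e::real. 0 \<le> e \<and>
                   Eexp P (\<lambda>\<omega>. Uext (U \<omega>) e) = Eexp P (\<lambda>\<omega>. Uext (U \<omega>) (enn2real (G \<omega>)))))))"
    using A BC by (rule conjI)
qed

end

theorem proposition3p2:
  fixes X :: "nat \<Rightarrow> 'a topology"
    and T :: nat
    and Qr :: "nat \<Rightarrow> (nat \<Rightarrow> 'a) \<Rightarrow> 'a measure set"
    and G :: "(nat \<Rightarrow> 'a) \<Rightarrow> ennreal"
  assumes T: "1 \<le> T"
    and Polish: "\<forall>t\<in>{1..T}. Polish_space (X t)"
    and Qr: "\<forall>s<T. \<forall>\<omega>\<in>topspace (Om X s). Qr (Suc s) \<omega> \<subseteq> probs (X (Suc s))"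
    and QT_ne: "QT X Qr T \<noteq> {}"
    and G_meas: "G \<in> borel_measurable (univ_space (Om X T))"
    and G_fin: "qs (Om X T) (QT X Qr T) (\<lambda>\<omega>. G \<omega> < \<infinity>)"
  shows
   "(\<forall>U. random_utility X T U
       \<and> (\<forall>y>0. (SUP P\<in>QT X Qr T. Epos P (\<lambda>\<omega>. ennreal (- U \<omega> y))) < \<infinity>)
       \<and> (\<forall>P\<in>QT X Qr T. Epos P (\<lambda>\<omega>. ennreal (U \<omega> 1)) < \<infinity>)
       \<and> (\<forall>P\<in>QT X Qr T. Epos P (\<lambda>\<omega>. e2ennreal \<bar>Uext (U \<omega>) (enn2real (G \<omega>))\<bar>) < \<infinity>)
     \<longrightarrow>
       (\<forall>P\<in>QT X Qr T. \<exists>!c::real. 0 \<le> c \<and>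
           Eexp P (\<lambda>\<omega>. Uext (U \<omega>) c) = Eexp P (\<lambda>\<omega>. Uext (U \<omega>) (enn2real (G \<omega>))))
     \<and> ((\<exists>M::real. qs (Om X T) (QT X Qr T) (\<lambda>\<omega>. G \<omega> \<le> ennreal M))
         \<and> (SUP P\<in>QT X Qr T. Epos P (\<lambda>\<omega>. e2ennreal (- Uext (U \<omega>) (enn2real (G \<omega>))))) < \<infinity>
         \<and> (\<forall>z>0. (INF P\<in>QT X Qr T. Epos P (\<lambda>\<omega>. ennreal (deriv (U \<omega>) z))) > 0)
        \<longrightarrow>
         (\<exists>!c::real. 0 \<le> c \<and> ennreal c \<le> qs_norm (Om X T) (QT X Qr T) G \<and>
            (INF P\<in>QT X Qr T. Eexp P (\<lambda>\<omega>. Uext (U \<omega>) c))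
              = (INF P\<in>QT X Qr T. Eexp P (\<lambda>\<omega>. Uext (U \<omega>) (enn2real (G \<omega>)))))
         \<and> (\<forall>c::real. 0 \<le> c \<and> ennreal c \<le> qs_norm (Om X T) (QT X Qr T) G \<and>
            (INF P\<in>QT X Qr T. Eexp P (\<lambda>\<omega>. Uext (U \<omega>) c))
              = (INF P\<in>QT X Qr T. Eexp P (\<lambda>\<omega>. Uext (U \<omega>) (enn2real (G \<omega>))))
            \<longrightarrow> c \<ge> (INF P\<in>QT X Qr T. (THE e::real. 0 \<le> e \<and>
                   Eexp P (\<lambda>\<omega>. Uext (U \<omega>) e) = Eexp P (\<lambda>\<omega>. Uext (U \<omega>) (enn2real (G \<omega>))))))))
    \<and>
    (\<forall>u. utility u \<and> {x. Uext u x > -\<infinity>} = {0<..}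
       \<and> (\<forall>P\<in>QT X Qr T. Epos P (\<lambda>\<omega>. e2ennreal (Uext u (enn2real (G \<omega>)))) < \<infinity>)
       \<and> (SUP P\<in>QT X Qr T. Epos P (\<lambda>\<omega>. e2ennreal (- Uext u (enn2real (G \<omega>))))) < \<infinity>
     \<longrightarrow>
       (\<forall>P\<in>QT X Qr T. \<exists>!c::real. 0 \<le> c \<and> Uext u c = Eexp P (\<lambda>\<omega>. Uext u (enn2real (G \<omega>))))
     \<and> (\<exists>!c::real. 0 \<le> c \<and> Uext u c = (INF P\<in>QT X Qr T. Eexp P (\<lambda>\<omega>. Uext u (enn2real (G \<omega>)))))
     \<and> (let eP = (\<lambda>P. THE c::real. 0 \<le> c \<and> Uext u c = Eexp P (\<lambda>\<omega>. Uext u (enn2real (G \<omega>))));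
           eG = (THE c::real. 0 \<le> c \<and>
                   Uext u c = (INF P\<in>QT X Qr T. Eexp P (\<lambda>\<omega>. Uext u (enn2real (G \<omega>)))));
           rho = (\<lambda>P. enn2ereal (Epos P G) - ereal (eP P));
           rhoG = (SUP P\<in>QT X Qr T. rho P)
       in (\<forall>P\<in>QT X Qr T. ennreal (eP P) \<le> Epos P G)
          \<and> eG = (INF P\<in>QT X Qr T. eP P)
          \<and> ennreal eG \<le> (INF P\<in>QT X Qr T. Epos P G)
          \<and> 0 \<le> rhoG
          \<and> rhoG \<le> (SUP P\<in>QT X Qr T. enn2ereal (Epos P G)) - ereal eG))"
proof -
  interpret setting X T Qr G
    by (unfold_locales) (use T Polish QT_ne G_meas G_fin in auto)
  show ?thesis using part1 part2 by (rule conjI)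
qed

end
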